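(* The Drury-Arveson shift $DA=(T_1,T_2)$ is not semi-hyponormal.
   Context: $DA$ is the 2-variable weighted shift on $\ell^2(\mathbb{Z}_+^2)$ (orthonormal basis $\{e_{\mathbf{k}}\}$) given by $T_1e_{(k_1,k_2)}=\sqrt{\frac{k_1+1}{k_1+k_2+1}}\,e_{(k_1+1,k_2)}$ and $T_2e_{(k_1,k_2)}=\sqrt{\frac{k_2+1}{k_1+k_2+1}}\,e_{(k_1,k_2+1)}$. For a commuting pair $(T_1,T_2)$ let $L=\begin{pmatrix} T_1^*T_1 & T_2^*T_1\\ T_1^*T_2 & T_2^*T_2\end{pmatrix}$ and $R=\begin{pmatrix} T_1T_1^* & T_1T_2^*\\ T_2T_1^* & T_2T_2^*\end{pmatrix}$ acting on $\mathcal{H}\oplus\mathcal{H}$; the pair is semi-hyponormal if $L\ge0$ and $\sqrt{L}\ge\sqrt{R}$ (positive square roots). *)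

theory Defs
  imports "HOL-Analysis.Analysis"
begin

type_synonym vec = "nat \<times> nat \<Rightarrow> complex"

definition l2 :: "vec set" where
  "l2 = {x. (\<lambda>k. (cmod (x k))\<^sup>2) summable_on UNIV}"

definition l2_inner :: "vec \<Rightarrow> vec \<Rightarrow> complex" where
  "l2_inner x y = (\<Sum>\<^sub>\<infinity>k. x k * cnj (y k))"

definition adj :: "(vec \<Rightarrow> vec) \<Rightarrow> (vec \<Rightarrow> vec)" where
  "adj A = (\<lambda>y. if y \<in> l2 then (THE z. z \<in> l2 \<and> (\<forall>x\<in>l2. l2_inner (A x) y = l2_inner x z))
                 else (\<lambda>_. 0))"

definition H2 :: "(vec \<times> vec) set" where
  "H2 = l2 \<times> l2"

definition H2_inner :: "vec \<times> vec \<Rightarrow> vec \<times> vec \<Rightarrow> complex" where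
  "H2_inner u v = l2_inner (fst u) (fst v) + l2_inner (snd u) (snd v)"

definition H2_norm :: "vec \<times> vec \<Rightarrow> real" where
  "H2_norm u = sqrt (Re (H2_inner u u))"

definition op_matrix ::
  "(vec \<Rightarrow> vec) \<Rightarrow> (vec \<Rightarrow> vec) \<Rightarrow> (vec \<Rightarrow> vec) \<Rightarrow> (vec \<Rightarrow> vec) \<Rightarrow> (vec \<times> vec \<Rightarrow> vec \<times> vec)" where
  "op_matrix A B C D = (\<lambda>(x, y). (\<lambda>k. A x k + B y k, \<lambda>k. C x k + D y k))"

definition pos_op2 :: "(vec \<times> vec \<Rightarrow> vec \<times> vec) \<Rightarrow> bool" where
  "pos_op2 P \<longleftrightarrow> (\<forall>u\<in>H2. Im (H2_inner (P u) u) = 0 \<and> Re (H2_inner (P u) u) \<ge> 0)"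

definition add2 :: "vec \<times> vec \<Rightarrow> vec \<times> vec \<Rightarrow> vec \<times> vec" where
  "add2 u v = (\<lambda>k. fst u k + fst v k, \<lambda>k. snd u k + snd v k)"

definition scale2 :: "complex \<Rightarrow> vec \<times> vec \<Rightarrow> vec \<times> vec" where
  "scale2 c u = (\<lambda>k. c * fst u k, \<lambda>k. c * snd u k)"

definition diff2 :: "(vec \<times> vec \<Rightarrow> vec \<times> vec) \<Rightarrow> (vec \<times> vec \<Rightarrow> vec \<times> vec) \<Rightarrow> (vec \<times> vec \<Rightarrow> vec \<times> vec)" where
  "diff2 S T = (\<lambda>u. (\<lambda>k. fst (S u) k - fst (T u) k, \<lambda>k. snd (S u) k - snd (T u) k))"

definition bounded_op2 :: "(vec \<times> vec \<Rightarrow> vec \<times> vec) \<Rightarrow> bool" where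
  "bounded_op2 S \<longleftrightarrow>
     (\<forall>u\<in>H2. S u \<in> H2) \<and>
     (\<forall>u\<in>H2. \<forall>v\<in>H2. S (add2 u v) = add2 (S u) (S v)) \<and>
     (\<forall>c. \<forall>u\<in>H2. S (scale2 c u) = scale2 c (S u)) \<and>
     (\<exists>C. \<forall>u\<in>H2. H2_norm (S u) \<le> C * H2_norm u)"

definition op_sqrt :: "(vec \<times> vec \<Rightarrow> vec \<times> vec) \<Rightarrow> (vec \<times> vec \<Rightarrow> vec \<times> vec)" where
  "op_sqrt P = (THE S. bounded_op2 S \<and> pos_op2 S \<and> (\<forall>u. u \<notin> H2 \<longrightarrow> S u = ((\<lambda>_. 0), (\<lambda>_. 0)))
                      \<and> (\<forall>u\<in>H2. S (S u) = P u))"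

definition L_op :: "(vec \<Rightarrow> vec) \<Rightarrow> (vec \<Rightarrow> vec) \<Rightarrow> (vec \<times> vec \<Rightarrow> vec \<times> vec)" where
  "L_op T1 T2 = op_matrix (adj T1 \<circ> T1) (adj T2 \<circ> T1) (adj T1 \<circ> T2) (adj T2 \<circ> T2)"

definition R_op :: "(vec \<Rightarrow> vec) \<Rightarrow> (vec \<Rightarrow> vec) \<Rightarrow> (vec \<times> vec \<Rightarrow> vec \<times> vec)" where
  "R_op T1 T2 = op_matrix (T1 \<circ> adj T1) (T1 \<circ> adj T2) (T2 \<circ> adj T1) (T2 \<circ> adj T2)"

definition semi_hyponormal :: "(vec \<Rightarrow> vec) \<Rightarrow> (vec \<Rightarrow> vec) \<Rightarrow> bool" where
  "semi_hyponormal T1 T2 \<longleftrightarrow>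
     pos_op2 (L_op T1 T2) \<and>
     pos_op2 (diff2 (op_sqrt (L_op T1 T2)) (op_sqrt (R_op T1 T2)))"

text \<open>The Drury-Arveson shift: T1 e_(k1,k2) = sqrt((k1+1)/(k1+k2+1)) e_(k1+1,k2), similarly T2.\<close>
definition DA1 :: "vec \<Rightarrow> vec" where
  "DA1 x = (\<lambda>(j1, j2). if j1 = 0 then 0
              else complex_of_real (sqrt (real j1 / real (j1 + j2))) * x (j1 - 1, j2))"

definition DA2 :: "vec \<Rightarrow> vec" where
  "DA2 x = (\<lambda>(j1, j2). if j2 = 0 then 0
              else complex_of_real (sqrt (real j2 / real (j1 + j2))) * x (j1, j2 - 1))"

end

theory Submission
  imports Defs
begin


definition dlt :: "nat \<times> nat \<Rightarrow> vec" where "dlt j = (\<lambda>k. if k = j then 1 else 0)"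

lemma ab2_le_sq: "2 * (a::real) * b \<le> a\<^sup>2 + b\<^sup>2" for a b
proof -
  have "0 \<le> (a - b)\<^sup>2" by simp
  then show ?thesis by (simp add: power2_diff)
qed

lemma ab_le_sq: "(a::real) * b \<le> a\<^sup>2 + b\<^sup>2" if "a \<ge> 0" "b \<ge> 0" for a b
  using ab2_le_sq[of a b] mult_nonneg_nonneg[OF that] by linarith

lemma l2_prod_summable:
  assumes "x \<in> l2" "y \<in> l2"
  shows "(\<lambda>k. x k * cnj (y k)) summable_on UNIV"
proof -
  have s: "(\<lambda>k. ((cmod (x k))\<^sup>2 + (cmod (y k))\<^sup>2)) summable_on UNIV"
    using assms by (intro summable_on_add) (auto simp: l2_def)
  have "(\<lambda>k. norm (x k * cnj (y k))) summable_on UNIV"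
  proof (rule summable_on_comparison_test[OF s])
    fix k
    show "norm (x k * cnj (y k)) \<le> (cmod (x k))\<^sup>2 + (cmod (y k))\<^sup>2"
      using ab_le_sq[of "cmod (x k)" "cmod (y k)"] by (simp add: norm_mult)
  qed simp
  then show ?thesis by (rule abs_summable_summable)
qed

lemma l2_lin:
  assumes "x \<in> l2" "y \<in> l2"
  shows "(\<lambda>k. a * x k + b * y k) \<in> l2"
proof -
  have s: "(\<lambda>k. 2 * (cmod a)\<^sup>2 * (cmod (x k))\<^sup>2 + 2 * (cmod b)\<^sup>2 * (cmod (y k))\<^sup>2) summable_on UNIV"
    using assms by (intro summable_on_add summable_on_cmult_right) (auto simp: l2_def)
  show ?thesis unfolding l2_def mem_Collect_eq
  proof (rule summable_on_comparison_test[OF s])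
    fix k
    have "cmod (a * x k + b * y k) \<le> cmod a * cmod (x k) + cmod b * cmod (y k)"
      by (metis norm_mult norm_triangle_ineq)
    hence "(cmod (a * x k + b * y k))\<^sup>2 \<le> (cmod a * cmod (x k) + cmod b * cmod (y k))\<^sup>2"
      by (simp add: power_mono)
    also have "\<dots> \<le> 2 * (cmod a)\<^sup>2 * (cmod (x k))\<^sup>2 + 2 * (cmod b)\<^sup>2 * (cmod (y k))\<^sup>2"
      using ab2_le_sq[of "cmod a * cmod (x k)" "cmod b * cmod (y k)"]
      by (simp add: power2_sum power_mult_distrib mult.assoc)
    finally show "(cmod (a * x k + b * y k))\<^sup>2 \<le> 2 * (cmod a)\<^sup>2 * (cmod (x k))\<^sup>2 + 2 * (cmod b)\<^sup>2 * (cmod (y k))\<^sup>2" .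
  qed simp
qed

lemma l2_add: "x \<in> l2 \<Longrightarrow> y \<in> l2 \<Longrightarrow> (\<lambda>k. x k + y k) \<in> l2"
  using l2_lin[of x y 1 1] by simp

lemma l2_scale: "x \<in> l2 \<Longrightarrow> (\<lambda>k. c * x k) \<in> l2"
  using l2_lin[of x x c 0] by simp

lemma l2_zero: "(\<lambda>_. 0) \<in> l2" by (simp add: l2_def)

lemma dlt_l2: "dlt j \<in> l2"
proof -
  have "(\<lambda>k. (cmod (dlt j k))\<^sup>2) summable_on UNIV \<longleftrightarrow> (\<lambda>k. (cmod (dlt j k))\<^sup>2) summable_on {j}"
    by (rule summable_on_cong_neutral) (auto simp: dlt_def)
  then show ?thesis unfolding l2_def by simp
qed

lemma inner_dlt: "l2_inner x (dlt j) = x j"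
proof -
  have "l2_inner x (dlt j) = infsum (\<lambda>k. x k * cnj (dlt j k)) {j}"
    unfolding l2_inner_def by (rule infsum_cong_neutral) (auto simp: dlt_def)
  also have "\<dots> = x j" by (simp add: dlt_def)
  finally show ?thesis .
qed

lemma inner_zero2: "l2_inner x (\<lambda>_. 0) = 0" by (simp add: l2_inner_def)
lemma inner_zero1: "l2_inner (\<lambda>_. 0) x = 0" by (simp add: l2_inner_def)

lemma inner_add1: "x \<in> l2 \<Longrightarrow> y \<in> l2 \<Longrightarrow> z \<in> l2 \<Longrightarrow> l2_inner (\<lambda>k. x k + y k) z = l2_inner x z + l2_inner y z"
  unfolding l2_inner_def by (simp add: distrib_right infsum_add l2_prod_summable)

lemma inner_scale1: "l2_inner (\<lambda>k. c * x k) z = c * l2_inner x z"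
  unfolding l2_inner_def by (simp add: mult.assoc infsum_cmult_right')

lemma inner_cnj: "l2_inner x y = cnj (l2_inner y x)"
  unfolding l2_inner_def by (subst infsum_cnj[symmetric]) (simp add: mult.commute)

lemma Re_mult_cnj: "Re (z * cnj z) = (cmod z)\<^sup>2"
  by (simp add: complex_mult_cnj cmod_power2)

lemma Im_mult_cnj: "Im (z * cnj z) = 0"
  by (simp add: complex_mult_cnj)

lemma inner_self_Re: assumes "x \<in> l2" shows "Re (l2_inner x x) = infsum (\<lambda>k. (cmod (x k))\<^sup>2) UNIV"
proof -
  have "Re (l2_inner x x) = infsum (\<lambda>k. Re (x k * cnj (x k))) UNIV"
    using infsum_Re[OF l2_prod_summable[OF assms assms]] by (simp add: l2_inner_def)
  then show ?thesis by (simp only: Re_mult_cnj)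
qed

lemma inner_self_Im: assumes "x \<in> l2" shows "Im (l2_inner x x) = 0"
proof -
  have "((\<lambda>k. x k * cnj (x k)) has_sum l2_inner x x) UNIV"
    unfolding l2_inner_def using l2_prod_summable[OF assms assms] by (simp add: summable_iff_has_sum_infsum)
  from has_sum_Im[OF this] have "((\<lambda>k::nat\<times>nat. 0::real) has_sum Im (l2_inner x x)) UNIV"
    by (simp add: Im_mult_cnj)
  from has_sum_unique[OF this has_sum_0_simp] show ?thesis .
qed

lemma inner_self_ge0: "x \<in> l2 \<Longrightarrow> Re (l2_inner x x) \<ge> 0"
  by (simp add: inner_self_Re infsum_nonneg)

lemma inner_self_zero: assumes "x \<in> l2" "Re (l2_inner x x) \<le> 0" shows "x = (\<lambda>_. 0)"
proof
  fix k
  have "(cmod (x k))\<^sup>2 = 0"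
    using nonneg_infsum_le_0D[of "\<lambda>k. (cmod (x k))\<^sup>2" UNIV k] assms
    by (simp add: inner_self_Re l2_def)
  then show "x k = 0" by simp
qed


abbreviation z0 :: "vec \<times> vec" where "z0 \<equiv> ((\<lambda>_. 0), (\<lambda>_. 0))"

lemma H2_mem: "u \<in> H2 \<longleftrightarrow> fst u \<in> l2 \<and> snd u \<in> l2"
  by (cases u) (simp add: H2_def)

lemma add2_H2: "u \<in> H2 \<Longrightarrow> v \<in> H2 \<Longrightarrow> add2 u v \<in> H2"
  by (simp add: H2_mem add2_def l2_add)

lemma scale2_H2: "u \<in> H2 \<Longrightarrow> scale2 c u \<in> H2"
  by (simp add: H2_mem scale2_def l2_scale)

lemma z0_H2: "z0 \<in> H2" by (simp add: H2_mem l2_zero)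

lemma H2_inner_add1: "u \<in> H2 \<Longrightarrow> v \<in> H2 \<Longrightarrow> w \<in> H2 \<Longrightarrow>
   H2_inner (add2 u v) w = H2_inner u w + H2_inner v w"
  by (simp add: H2_mem H2_inner_def add2_def inner_add1)

lemma H2_inner_scale1: "H2_inner (scale2 c u) w = c * H2_inner u w"
  by (simp add: H2_inner_def scale2_def inner_scale1 distrib_left)

lemma H2_inner_cnj: "H2_inner u v = cnj (H2_inner v u)"
  by (simp add: H2_inner_def inner_cnj[of "fst u"] inner_cnj[of "snd u"])

lemma H2_inner_add2: "u \<in> H2 \<Longrightarrow> v \<in> H2 \<Longrightarrow> w \<in> H2 \<Longrightarrow>
   H2_inner w (add2 u v) = H2_inner w u + H2_inner w v"
  by (subst H2_inner_cnj) (simp add: H2_inner_add1 H2_inner_cnj[of u w] H2_inner_cnj[of v w])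

lemma H2_inner_scale2: "H2_inner w (scale2 c u) = cnj c * H2_inner w u"
  by (subst H2_inner_cnj) (simp add: H2_inner_scale1 H2_inner_cnj[of u w])

lemma H2_inner_z0_1: "H2_inner z0 w = 0" by (simp add: H2_inner_def inner_zero1)
lemma H2_inner_z0_2: "H2_inner w z0 = 0" by (simp add: H2_inner_def inner_zero2)

lemma H2_self_Im: "u \<in> H2 \<Longrightarrow> Im (H2_inner u u) = 0"
  by (simp add: H2_mem H2_inner_def inner_self_Im)

lemma H2_self_Re: "u \<in> H2 \<Longrightarrow> Re (H2_inner u u) \<ge> 0"
  by (simp add: H2_mem H2_inner_def inner_self_ge0)

lemma H2_self_zero: assumes "u \<in> H2" "Re (H2_inner u u) \<le> 0" shows "u = z0"
proof -
  have a: "fst u \<in> l2" "snd u \<in> l2" using assms(1) by (auto simp: H2_mem)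
  have "Re (l2_inner (fst u) (fst u)) \<ge> 0" "Re (l2_inner (snd u) (snd u)) \<ge> 0"
    using a by (auto intro: inner_self_ge0)
  with assms(2) have "Re (l2_inner (fst u) (fst u)) \<le> 0" "Re (l2_inner (snd u) (snd u)) \<le> 0"
    by (auto simp: H2_inner_def)
  then have "fst u = (\<lambda>_. 0)" "snd u = (\<lambda>_. 0)" using a inner_self_zero by blast+
  then show ?thesis by (simp add: prod_eq_iff)
qed

definition lin_op :: "(vec \<times> vec \<Rightarrow> vec \<times> vec) \<Rightarrow> bool" where
  "lin_op S \<longleftrightarrow> (\<forall>u\<in>H2. S u \<in> H2) \<and>
     (\<forall>u\<in>H2. \<forall>v\<in>H2. S (add2 u v) = add2 (S u) (S v)) \<and>
     (\<forall>c. \<forall>u\<in>H2. S (scale2 c u) = scale2 c (S u))"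

lemma bounded_lin: "bounded_op2 S \<Longrightarrow> lin_op S"
  by (simp add: bounded_op2_def lin_op_def)

lemma selfadj:
  assumes lin: "lin_op S" and pos: "pos_op2 S" and u: "u \<in> H2" and v: "v \<in> H2"
  shows "H2_inner (S u) v = H2_inner u (S v)"
proof -
  have Su: "S u \<in> H2" and Sv: "S v \<in> H2" using lin u v by (auto simp: lin_op_def)
  define a where "a = H2_inner (S u) v"
  define b where "b = H2_inner (S v) u"
  have iv: "scale2 \<i> v \<in> H2" using v by (rule scale2_H2)
  have w1: "add2 u v \<in> H2" using u v by (rule add2_H2)
  have w2: "add2 u (scale2 \<i> v) \<in> H2" using u iv by (rule add2_H2)
  have S1: "S (add2 u v) = add2 (S u) (S v)" using lin u v by (auto simp: lin_op_def)
  have S2: "S (add2 u (scale2 \<i> v)) = add2 (S u) (scale2 \<i> (S v))" using lin u v iv by (auto simp: lin_op_def)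
  have e1: "H2_inner (S (add2 u v)) (add2 u v) = H2_inner (S u) u + a + b + H2_inner (S v) v"
    unfolding S1 a_def b_def using u v Su Sv
    by (simp add: H2_inner_add1 H2_inner_add2 add2_H2)
  have e2: "H2_inner (S (add2 u (scale2 \<i> v))) (add2 u (scale2 \<i> v)) = H2_inner (S u) u - \<i> * a + \<i> * b + H2_inner (S v) v"
    unfolding S2 a_def b_def using u v Su Sv iv scale2_H2[OF Sv]
    by (simp add: H2_inner_add1 H2_inner_add2 add2_H2 H2_inner_scale1 H2_inner_scale2 algebra_simps)
  have p0: "Im (H2_inner (S u) u) = 0" "Im (H2_inner (S v) v) = 0" using pos u v by (auto simp: pos_op2_def)
  have p1: "Im (H2_inner (S (add2 u v)) (add2 u v)) = 0" using pos w1 by (auto simp: pos_op2_def)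
  have p2: "Im (H2_inner (S (add2 u (scale2 \<i> v))) (add2 u (scale2 \<i> v))) = 0" using pos w2 by (auto simp: pos_op2_def)
  from p1 p0 have i1: "Im a + Im b = 0" by (simp add: e1)
  from p2 p0 have i2: "Re b - Re a = 0" by (simp add: e2)
  have "b = cnj a" using i1 i2 by (simp add: complex_eq_iff)
  then show ?thesis by (simp add: a_def b_def H2_inner_cnj[of u "S v"])
qed


definition sqc :: "(vec \<times> vec \<Rightarrow> vec \<times> vec) \<Rightarrow> (vec \<times> vec \<Rightarrow> vec \<times> vec) \<Rightarrow> bool" where
  "sqc P S \<longleftrightarrow> lin_op S \<and> pos_op2 S \<and> (\<forall>w\<in>H2. S (S w) = P w)"

lemma linA: "lin_op S \<Longrightarrow> u \<in> H2 \<Longrightarrow> v \<in> H2 \<Longrightarrow> S (add2 u v) = add2 (S u) (S v)"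
  by (simp add: lin_op_def)
lemma linS: "lin_op S \<Longrightarrow> u \<in> H2 \<Longrightarrow> S (scale2 c u) = scale2 c (S u)"
  by (simp add: lin_op_def)
lemma linH: "lin_op S \<Longrightarrow> u \<in> H2 \<Longrightarrow> S u \<in> H2"
  by (simp add: lin_op_def)

lemma sqc_lin: "sqc P S \<Longrightarrow> lin_op S" by (simp add: sqc_def)
lemma sqc_pos: "sqc P S \<Longrightarrow> pos_op2 S" by (simp add: sqc_def)
lemma sqc_sq: "sqc P S \<Longrightarrow> w \<in> H2 \<Longrightarrow> S (S w) = P w" by (simp add: sqc_def)
lemma sqc_PH: "sqc P S \<Longrightarrow> w \<in> H2 \<Longrightarrow> P w \<in> H2"
  by (metis sqc_def linH)

lemma kerL:
  assumes Q: "sqc P S" and v: "v \<in> H2" and Pv: "P v = z0"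
  shows "S v = z0"
proof -
  have lin: "lin_op S" and pos: "pos_op2 S" using Q by (auto simp: sqc_def)
  have Sv: "S v \<in> H2" using lin v by (rule linH)
  have "H2_inner (S (S v)) v = H2_inner (S v) (S v)" using selfadj[OF lin pos Sv v] .
  moreover have "S (S v) = z0" using sqc_sq[OF Q v] Pv by simp
  ultimately have "H2_inner (S v) (S v) = 0" by (simp add: H2_inner_z0_1)
  then show ?thesis using H2_self_zero[OF Sv] by simp
qed

lemma chL:
  assumes Q: "sqc P S" and v: "v \<in> H2" and dp: "\<delta> > 0" and tp: "t \<ge> 0"
    and rel: "P (P v) = add2 (scale2 (of_real t) (P v)) (scale2 (of_real (- \<delta>)) v)"
  shows "S v = scale2 (of_real (1 / sqrt (t + 2 * sqrt \<delta>))) (add2 (P v) (scale2 (of_real (sqrt \<delta>)) v))"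
proof -
  have lin: "lin_op S" and pos: "pos_op2 S" using Q by (auto simp: sqc_def)
  define d where "d = sqrt \<delta>"
  define \<tau> where "\<tau> = sqrt (t + 2 * d)"
  have d0: "d > 0" using dp by (simp add: d_def)
  have \<tau>0: "\<tau> > 0" using d0 tp by (simp add: \<tau>_def)
  have dd: "d * d = \<delta>" using dp by (simp add: d_def)
  have tt: "\<tau> * \<tau> = t + 2 * d" using d0 tp by (simp add: \<tau>_def)
  have ddc: "complex_of_real d * complex_of_real d = complex_of_real \<delta>" by (metis dd of_real_mult)
  have ttc: "complex_of_real \<tau> * complex_of_real \<tau> = complex_of_real t + 2 * complex_of_real d"
    by (metis tt of_real_mult of_real_add of_real_numeral)
  have ttc2: "\<And>X. complex_of_real \<tau> * (complex_of_real \<tau> * X) = (complex_of_real t + 2 * complex_of_real d) * X"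
    by (simp only: mult.assoc[symmetric] ttc)
  have ddc2: "\<And>X. complex_of_real d * (complex_of_real d * X) = complex_of_real \<delta> * X"
    by (simp only: mult.assoc[symmetric] ddc)
  have Sv: "S v \<in> H2" using lin v by (rule linH)
  have SSv: "S (S v) = P v" using sqc_sq[OF Q v] .
  have Pv: "P v \<in> H2" using sqc_PH[OF Q v] .
  have SPv: "S (P v) \<in> H2" using lin Pv by (rule linH)
  have SSPv: "S (S (P v)) = P (P v)" using sqc_sq[OF Q Pv] .
  define z where "z = add2 (add2 (P v) (scale2 (of_real (- \<tau>)) (S v))) (scale2 (of_real d) v)"
  have z: "z \<in> H2" unfolding z_def using v Sv Pv by (intro add2_H2 scale2_H2)
  have Sz_eq: "S z = add2 (add2 (S (P v)) (scale2 (of_real (- \<tau>)) (P v))) (scale2 (of_real d) (S v))"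
    unfolding z_def using v Sv Pv
    by (simp add: linA[OF lin] linS[OF lin] add2_H2 scale2_H2 SSv)
  have SSz_eq: "S (S z) = add2 (add2 (P (P v)) (scale2 (of_real (- \<tau>)) (S (P v)))) (scale2 (of_real d) (P v))"
    unfolding Sz_eq using v Sv Pv SPv
    by (simp add: linA[OF lin] linS[OF lin] add2_H2 scale2_H2 SSv SSPv)
  have Sz: "S z \<in> H2" using lin z by (rule linH)
  have SSz: "S (S z) \<in> H2" using lin Sz by (rule linH)
  have rel1: "\<And>k. fst (P (P v)) k = of_real t * fst (P v) k + of_real (- \<delta>) * fst v k"
    and rel2: "\<And>k. snd (P (P v)) k = of_real t * snd (P v) k + of_real (- \<delta>) * snd v k"
    using rel by (simp_all add: add2_def scale2_def)
  have W: "add2 (add2 (S (S z)) (scale2 (of_real \<tau>) (S z))) (scale2 (of_real d) z) = z0"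
    unfolding SSz_eq unfolding Sz_eq
    by (simp add: z_def add2_def scale2_def prod_eq_iff fun_eq_iff rel1 rel2 algebra_simps ttc2 ddc2)
  have "H2_inner (add2 (add2 (S (S z)) (scale2 (of_real \<tau>) (S z))) (scale2 (of_real d) z)) z
        = H2_inner (S (S z)) z + of_real \<tau> * H2_inner (S z) z + of_real d * H2_inner z z"
    using z Sz SSz by (simp add: H2_inner_add1 add2_H2 scale2_H2 H2_inner_scale1)
  then have eq0: "0 = H2_inner (S (S z)) z + of_real \<tau> * H2_inner (S z) z + of_real d * H2_inner z z"
    unfolding W by (simp add: H2_inner_z0_1)
  have r1: "Re (H2_inner (S (S z)) z) \<ge> 0"
    using selfadj[OF lin pos Sz z] H2_self_Re[OF Sz] by simp
  have r2: "Re (H2_inner (S z) z) \<ge> 0" using pos z by (simp add: pos_op2_def)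
  have "0 = Re (H2_inner (S (S z)) z) + \<tau> * Re (H2_inner (S z) z) + d * Re (H2_inner z z)"
    using arg_cong[OF eq0, of Re] by simp
  moreover have "\<tau> * Re (H2_inner (S z) z) \<ge> 0" using r2 \<tau>0 by simp
  ultimately have "d * Re (H2_inner z z) \<le> 0" using r1 by linarith
  then have "Re (H2_inner z z) \<le> 0" using d0 by (simp add: mult_le_0_iff)
  then have "z = z0" using H2_self_zero[OF z] by simp
  then have zz: "\<And>a b. fst (P v) (a,b) - of_real \<tau> * fst (S v) (a,b) + of_real d * fst v (a,b) = 0"
     "\<And>a b. snd (P v) (a,b) - of_real \<tau> * snd (S v) (a,b) + of_real d * snd v (a,b) = 0"
    unfolding z_def by (simp_all add: add2_def scale2_def prod_eq_iff fun_eq_iff)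
  have tc: "complex_of_real \<tau> \<noteq> 0" using \<tau>0 by simp
  show ?thesis unfolding d_def[symmetric] \<tau>_def[symmetric]
    using zz tc by (simp add: add2_def scale2_def prod_eq_iff fun_eq_iff field_simps)
qed


lemma P_scale: assumes Q: "sqc P S" and u: "u \<in> H2" shows "P (scale2 c u) = scale2 c (P u)"
proof -
  have lin: "lin_op S" using Q by (simp add: sqc_def)
  have "P (scale2 c u) = S (S (scale2 c u))" using sqc_sq[OF Q scale2_H2[OF u]] by simp
  also have "\<dots> = scale2 c (S (S u))" using u lin by (simp add: linS linH)
  finally show ?thesis using sqc_sq[OF Q u] by simp
qed

lemma P_add: assumes Q: "sqc P S" and u: "u \<in> H2" and v: "v \<in> H2" shows "P (add2 u v) = add2 (P u) (P v)"
proof -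
  have lin: "lin_op S" using Q by (simp add: sqc_def)
  have "P (add2 u v) = S (S (add2 u v))" using sqc_sq[OF Q add2_H2[OF u v]] by simp
  also have "\<dots> = add2 (S (S u)) (S (S v))" using u v lin by (simp add: linA linH)
  finally show ?thesis using sqc_sq[OF Q u] sqc_sq[OF Q v] by simp
qed

lemma uL:
  assumes Q: "sqc P S" and v: "v \<in> H2" and tp: "t \<ge> 0" and dp: "\<delta> \<ge> 0"
    and rel: "P (P v) = add2 (scale2 (of_real t) (P v)) (scale2 (of_real (- \<delta>)) v)"
  shows "S v = scale2 (of_real (1 / sqrt (t + 2 * sqrt \<delta>))) (add2 (P v) (scale2 (of_real (sqrt \<delta>)) v))"
proof (cases "\<delta> > 0")
  case True
  then show ?thesis using chL[OF Q v True tp rel] by simp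
next
  case False
  then have d0: "\<delta> = 0" using dp by simp
  have lin: "lin_op S" and pos: "pos_op2 S" using Q by (auto simp: sqc_def)
  have Pv: "P v \<in> H2" using sqc_PH[OF Q v] .
  have Sv: "S v \<in> H2" using lin v by (rule linH)
  show ?thesis
  proof (cases "t > 0")
    case True
    define w where "w = P v"
    have w: "w \<in> H2" using Pv by (simp add: w_def)
    have Pw: "P w = scale2 (of_real t) w"
      using rel d0 by (simp add: w_def add2_def scale2_def prod_eq_iff fun_eq_iff)
    have relw: "P (P w) = add2 (scale2 (of_real (2 * t)) (P w)) (scale2 (of_real (- (t * t))) w)"
      unfolding Pw using P_scale[OF Q w] Pw
      by (simp add: add2_def scale2_def prod_eq_iff fun_eq_iff algebra_simps)
    have tt: "t * t > 0" using True by simp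
    have Sw0: "S w = scale2 (of_real (1 / sqrt (2 * t + 2 * sqrt (t * t)))) (add2 (P w) (scale2 (of_real (sqrt (t * t))) w))"
      using chL[OF Q w tt _ relw] True by simp
    have s1: "sqrt (t * t) = t" using True by simp
    have s2: "sqrt (2 * t + 2 * t) = 2 * sqrt t" 
    proof -
      have "2 * t + 2 * t = 2\<^sup>2 * t" by simp
      then show ?thesis by (simp add: real_sqrt_mult)
    qed
    have st: "sqrt t * sqrt t = t" using True by simp
    have stc: "complex_of_real (sqrt t) * complex_of_real (sqrt t) = complex_of_real t"
      by (metis st of_real_mult)
    have stn: "complex_of_real (sqrt t) \<noteq> 0" using True by simp
    have Sw: "S w = scale2 (of_real (sqrt t)) w"
      unfolding Sw0 Pw s1 s2 using stn
      by (simp add: add2_def scale2_def prod_eq_iff fun_eq_iff field_simps stc[symmetric])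
    define v' where "v' = add2 v (scale2 (of_real (- 1 / t)) w)"
    have v': "v' \<in> H2" unfolding v'_def using v w by (intro add2_H2 scale2_H2)
    have "P v' = add2 (P v) (scale2 (of_real (- 1 / t)) (P w))"
      unfolding v'_def using P_add[OF Q v scale2_H2[OF w]] P_scale[OF Q w] by simp
    also have "\<dots> = z0" unfolding Pw using True
      by (simp add: w_def add2_def scale2_def prod_eq_iff fun_eq_iff field_simps)
    finally have "S v' = z0" using kerL[OF Q v'] by simp
    moreover have "S v' = add2 (S v) (scale2 (of_real (- 1 / t)) (S w))"
      unfolding v'_def using v w by (simp add: linA[OF lin] linS[OF lin] scale2_H2)
    ultimately have zz: "\<And>a b. fst (S v) (a,b) + of_real (- 1 / t) * fst (S w) (a,b) = 0"
       "\<And>a b. snd (S v) (a,b) + of_real (- 1 / t) * snd (S w) (a,b) = 0"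
      by (simp_all add: add2_def scale2_def prod_eq_iff fun_eq_iff)
    have tn: "complex_of_real t \<noteq> 0" using True by simp
    show ?thesis using zz tn stn unfolding d0 Sw
      by (simp add: add2_def scale2_def prod_eq_iff fun_eq_iff w_def field_simps stc[symmetric])
  next
    case False
    then have t0: "t = 0" using tp by simp
    have PPv: "P (P v) = z0" using rel t0 d0 by (simp add: add2_def scale2_def prod_eq_iff fun_eq_iff)
    have SPv: "S (P v) = z0" using kerL[OF Q Pv PPv] .
    have SSv: "S (S v) = P v" using sqc_sq[OF Q v] .
    have SSv': "S (S v) \<in> H2" using Pv SSv by simp
    have "H2_inner (S (S v)) (S (S v)) = H2_inner (S v) (S (S (S v)))"
      using selfadj[OF lin pos Sv SSv'] .
    also have "\<dots> = 0" unfolding SSv SPv by (simp add: H2_inner_z0_2)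
    finally have "P v = z0" using H2_self_zero[OF Pv] SSv by simp
    then have "S v = z0" using kerL[OF Q v] by simp
    then show ?thesis using t0 d0 by (simp add: add2_def scale2_def prod_eq_iff fun_eq_iff)
  qed
qed


lemma H2_inner_dltX: "H2_inner w (dlt k, \<lambda>_. 0) = fst w k"
  by (simp add: H2_inner_def inner_dlt inner_zero2)
lemma H2_inner_dltY: "H2_inner w (\<lambda>_. 0, dlt k) = snd w k"
  by (simp add: H2_inner_def inner_dlt inner_zero2)
lemma dltX_H2: "(dlt k, \<lambda>_. 0) \<in> H2" by (simp add: H2_mem dlt_l2 l2_zero)
lemma dltY_H2: "(\<lambda>_. 0, dlt k) \<in> H2" by (simp add: H2_mem dlt_l2 l2_zero)

definition basis_ok :: "(vec \<times> vec \<Rightarrow> vec \<times> vec) \<Rightarrow> vec \<times> vec \<Rightarrow> bool" where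
  "basis_ok P e \<longleftrightarrow> (\<exists>t \<delta>. t \<ge> 0 \<and> \<delta> \<ge> 0 \<and>
      P (P e) = add2 (scale2 (of_real t) (P e)) (scale2 (of_real (- \<delta>)) e))"

lemma basis_same:
  assumes Q1: "sqc P S1" and Q2: "sqc P S2" and e: "e \<in> H2" and ok: "basis_ok P e"
  shows "S1 e = S2 e"
proof -
  obtain t \<delta> where "t \<ge> 0" "\<delta> \<ge> 0"
      "P (P e) = add2 (scale2 (of_real t) (P e)) (scale2 (of_real (- \<delta>)) e)"
    using ok by (auto simp: basis_ok_def)
  then show ?thesis using uL[OF Q1 e] uL[OF Q2 e] by simp
qed

lemma sqc_unique:
  assumes Q1: "sqc P S1" and Q2: "sqc P S2"
    and okX: "\<And>k. basis_ok P (dlt k, \<lambda>_. 0)" and okY: "\<And>k. basis_ok P (\<lambda>_. 0, dlt k)"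
    and u: "u \<in> H2"
  shows "S1 u = S2 u"
proof -
  have lin1: "lin_op S1" and pos1: "pos_op2 S1" using Q1 by (auto simp: sqc_def)
  have lin2: "lin_op S2" and pos2: "pos_op2 S2" using Q2 by (auto simp: sqc_def)
  have "fst (S1 u) k = fst (S2 u) k" for k
  proof -
    have "fst (S1 u) k = H2_inner (S1 u) (dlt k, \<lambda>_. 0)" by (simp add: H2_inner_dltX)
    also have "\<dots> = H2_inner u (S1 (dlt k, \<lambda>_. 0))" using selfadj[OF lin1 pos1 u dltX_H2] .
    also have "\<dots> = H2_inner u (S2 (dlt k, \<lambda>_. 0))" using basis_same[OF Q1 Q2 dltX_H2 okX] by simp
    also have "\<dots> = H2_inner (S2 u) (dlt k, \<lambda>_. 0)" using selfadj[OF lin2 pos2 u dltX_H2] by simp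
    finally show ?thesis by (simp add: H2_inner_dltX)
  qed
  moreover have "snd (S1 u) k = snd (S2 u) k" for k
  proof -
    have "snd (S1 u) k = H2_inner (S1 u) (\<lambda>_. 0, dlt k)" by (simp add: H2_inner_dltY)
    also have "\<dots> = H2_inner u (S1 (\<lambda>_. 0, dlt k))" using selfadj[OF lin1 pos1 u dltY_H2] .
    also have "\<dots> = H2_inner u (S2 (\<lambda>_. 0, dlt k))" using basis_same[OF Q1 Q2 dltY_H2 okY] by simp
    also have "\<dots> = H2_inner (S2 u) (\<lambda>_. 0, dlt k)" using selfadj[OF lin2 pos2 u dltY_H2] by simp
    finally show ?thesis by (simp add: H2_inner_dltY)
  qed
  ultimately show ?thesis by (simp add: prod_eq_iff fun_eq_iff)
qed

lemma op_sqrt_eq: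
  assumes b: "bounded_op2 S0" and p: "pos_op2 S0" and z: "\<forall>u. u \<notin> H2 \<longrightarrow> S0 u = z0"
    and sq: "\<forall>u\<in>H2. S0 (S0 u) = P u"
    and okX: "\<And>k. basis_ok P (dlt k, \<lambda>_. 0)" and okY: "\<And>k. basis_ok P (\<lambda>_. 0, dlt k)"
  shows "op_sqrt P = S0"
  unfolding op_sqrt_def
proof (rule the_equality)
  show "bounded_op2 S0 \<and> pos_op2 S0 \<and> (\<forall>u. u \<notin> H2 \<longrightarrow> S0 u = z0) \<and> (\<forall>u\<in>H2. S0 (S0 u) = P u)"
    using assms by blast
  fix S assume S: "bounded_op2 S \<and> pos_op2 S \<and> (\<forall>u. u \<notin> H2 \<longrightarrow> S u = z0) \<and> (\<forall>u\<in>H2. S (S u) = P u)"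
  have Q0: "sqc P S0" using b p sq by (simp add: sqc_def bounded_lin)
  have QS: "sqc P S" using S by (simp add: sqc_def bounded_lin)
  show "S = S0"
  proof
    fix u show "S u = S0 u"
    proof (cases "u \<in> H2")
      case True then show ?thesis using sqc_unique[OF QS Q0 okX okY] by blast
    next
      case False
      have "S u = z0" using S False by blast
      moreover have "S0 u = z0" using z False by blast
      ultimately show ?thesis by simp
    qed
  qed
qed

definition shX :: "(nat \<times> nat \<Rightarrow> 'a::zero) \<Rightarrow> nat \<times> nat \<Rightarrow> 'a" where
  "shX f \<beta> = (if snd \<beta> = 0 then 0 else f (fst \<beta>, snd \<beta> - 1))"
definition shY :: "(nat \<times> nat \<Rightarrow> 'a::zero) \<Rightarrow> nat \<times> nat \<Rightarrow> 'a" where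
  "shY f \<beta> = (if fst \<beta> = 0 then 0 else f (fst \<beta> - 1, snd \<beta>))"

lemma hasX: "(shX f has_sum s) UNIV \<longleftrightarrow> (f has_sum s) UNIV"
proof -
  have "(shX f has_sum s) UNIV \<longleftrightarrow> (shX f has_sum s) {\<beta>. snd \<beta> \<noteq> 0}"
    by (rule has_sum_cong_neutral) (auto simp: shX_def)
  also have "\<dots> \<longleftrightarrow> (f has_sum s) UNIV"
    by (rule has_sum_reindex_bij_witness[where i="\<lambda>k. (fst k, snd k + 1)" and j="\<lambda>\<beta>. (fst \<beta>, snd \<beta> - 1)"])
       (auto simp: shX_def)
  finally show ?thesis .
qed

lemma hasY: "(shY f has_sum s) UNIV \<longleftrightarrow> (f has_sum s) UNIV"
proof -
  have "(shY f has_sum s) UNIV \<longleftrightarrow> (shY f has_sum s) {\<beta>. fst \<beta> \<noteq> 0}"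
    by (rule has_sum_cong_neutral) (auto simp: shY_def)
  also have "\<dots> \<longleftrightarrow> (f has_sum s) UNIV"
    by (rule has_sum_reindex_bij_witness[where i="\<lambda>k. (fst k + 1, snd k)" and j="\<lambda>\<beta>. (fst \<beta> - 1, snd \<beta>)"])
       (auto simp: shY_def)
  finally show ?thesis .
qed

lemma sumX: "shX f summable_on UNIV \<longleftrightarrow> f summable_on UNIV"
  by (simp add: summable_on_def hasX)
lemma sumY: "shY f summable_on UNIV \<longleftrightarrow> f summable_on UNIV"
  by (simp add: summable_on_def hasY)

lemma infX: "infsum (shX f) UNIV = infsum f UNIV"
  by (metis hasX infsumI infsum_not_exists summable_on_def)
lemma infY: "infsum (shY f) UNIV = infsum f UNIV"
  by (metis hasY infsumI infsum_not_exists summable_on_def)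


definition BX :: "vec \<times> vec \<Rightarrow> nat \<times> nat \<Rightarrow> complex" where "BX u = shX (fst u)"
definition BY :: "vec \<times> vec \<Rightarrow> nat \<times> nat \<Rightarrow> complex" where "BY u = shY (snd u)"

lemma BX_inv: "fst u k = BX u (fst k, snd k + 1)" by (simp add: BX_def shX_def)
lemma BY_inv: "snd u k = BY u (fst k + 1, snd k)" by (simp add: BY_def shY_def)

lemma B_ext: assumes "\<And>\<beta>. BX u \<beta> = BX v \<beta>" "\<And>\<beta>. BY u \<beta> = BY v \<beta>" shows "u = v"
proof -
  have "fst u = fst v" by (rule ext) (metis BX_inv assms(1))
  moreover have "snd u = snd v" by (rule ext) (metis BY_inv assms(2))
  ultimately show ?thesis by (simp add: prod_eq_iff)
qed

lemma shX_norm: "(\<lambda>\<beta>. (cmod (shX x \<beta>))\<^sup>2) = shX (\<lambda>k. (cmod (x k))\<^sup>2)"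
  by (auto simp: shX_def fun_eq_iff)
lemma shY_norm: "(\<lambda>\<beta>. (cmod (shY x \<beta>))\<^sup>2) = shY (\<lambda>k. (cmod (x k))\<^sup>2)"
  by (auto simp: shY_def fun_eq_iff)
lemma shX_prod: "(\<lambda>\<beta>. shX x \<beta> * cnj (shX y \<beta>)) = shX (\<lambda>k. x k * cnj (y k))"
  by (auto simp: shX_def fun_eq_iff)
lemma shY_prod: "(\<lambda>\<beta>. shY x \<beta> * cnj (shY y \<beta>)) = shY (\<lambda>k. x k * cnj (y k))"
  by (auto simp: shY_def fun_eq_iff)

lemma l2_shX: "x \<in> l2 \<longleftrightarrow> (\<lambda>\<beta>. (cmod (shX x \<beta>))\<^sup>2) summable_on UNIV"
  by (simp add: shX_norm sumX l2_def)
lemma l2_shY: "x \<in> l2 \<longleftrightarrow> (\<lambda>\<beta>. (cmod (shY x \<beta>))\<^sup>2) summable_on UNIV"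
  by (simp add: shY_norm sumY l2_def)

lemma H2_B: "u \<in> H2 \<longleftrightarrow> (\<lambda>\<beta>. (cmod (BX u \<beta>))\<^sup>2) summable_on UNIV \<and> (\<lambda>\<beta>. (cmod (BY u \<beta>))\<^sup>2) summable_on UNIV"
  unfolding H2_mem BX_def BY_def using l2_shX[of "fst u"] l2_shY[of "snd u"] by blast

lemma H2_inner_B: "H2_inner v u = infsum (\<lambda>\<beta>. BX v \<beta> * cnj (BX u \<beta>)) UNIV + infsum (\<lambda>\<beta>. BY v \<beta> * cnj (BY u \<beta>)) UNIV"
  by (simp add: H2_inner_def l2_inner_def BX_def BY_def shX_prod shY_prod infX infY)

lemma H2_prodX: "v \<in> H2 \<Longrightarrow> u \<in> H2 \<Longrightarrow> (\<lambda>\<beta>. BX v \<beta> * cnj (BX u \<beta>)) summable_on UNIV"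
  by (simp add: H2_mem BX_def shX_prod sumX l2_prod_summable)
lemma H2_prodY: "v \<in> H2 \<Longrightarrow> u \<in> H2 \<Longrightarrow> (\<lambda>\<beta>. BY v \<beta> * cnj (BY u \<beta>)) summable_on UNIV"
  by (simp add: H2_mem BY_def shY_prod sumY l2_prod_summable)

lemma H2_normsq_B: assumes "u \<in> H2"
  shows "Re (H2_inner u u) = infsum (\<lambda>\<beta>. (cmod (BX u \<beta>))\<^sup>2 + (cmod (BY u \<beta>))\<^sup>2) UNIV"
proof -
  have sx: "(\<lambda>\<beta>. (cmod (BX u \<beta>))\<^sup>2) summable_on UNIV" and sy: "(\<lambda>\<beta>. (cmod (BY u \<beta>))\<^sup>2) summable_on UNIV"
    using assms by (auto simp: H2_B)
  have "Re (H2_inner u u) = Re (l2_inner (fst u) (fst u)) + Re (l2_inner (snd u) (snd u))"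
    by (simp add: H2_inner_def)
  also have "\<dots> = infsum (\<lambda>k. (cmod (fst u k))\<^sup>2) UNIV + infsum (\<lambda>k. (cmod (snd u k))\<^sup>2) UNIV"
    using assms by (simp add: H2_mem inner_self_Re)
  also have "\<dots> = infsum (\<lambda>\<beta>. (cmod (BX u \<beta>))\<^sup>2) UNIV + infsum (\<lambda>\<beta>. (cmod (BY u \<beta>))\<^sup>2) UNIV"
    by (simp add: BX_def BY_def shX_norm shY_norm infX infY)
  also have "\<dots> = infsum (\<lambda>\<beta>. (cmod (BX u \<beta>))\<^sup>2 + (cmod (BY u \<beta>))\<^sup>2) UNIV"
    using sx sy by (simp add: infsum_add)
  finally show ?thesis .
qed

definition blk :: "(nat \<times> nat \<Rightarrow> real) \<Rightarrow> (nat \<times> nat \<Rightarrow> real) \<Rightarrow> (nat \<times> nat \<Rightarrow> real) \<Rightarrow> vec \<times> vec \<Rightarrow> vec \<times> vec" where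
  "blk a b c u = (\<lambda>k. of_real (a (fst k, snd k + 1)) * fst u k + of_real (b (fst k, snd k + 1)) * BY u (fst k, snd k + 1),
                  \<lambda>k. of_real (b (fst k + 1, snd k)) * BX u (fst k + 1, snd k) + of_real (c (fst k + 1, snd k)) * snd u k)"

definition nrm :: "(nat \<times> nat \<Rightarrow> real) \<Rightarrow> (nat \<times> nat \<Rightarrow> real) \<Rightarrow> (nat \<times> nat \<Rightarrow> real) \<Rightarrow> bool" where
  "nrm a b c \<longleftrightarrow> (\<forall>\<beta>. snd \<beta> = 0 \<longrightarrow> a \<beta> = 0 \<and> b \<beta> = 0) \<and> (\<forall>\<beta>. fst \<beta> = 0 \<longrightarrow> c \<beta> = 0 \<and> b \<beta> = 0)"

lemma BX_blk: assumes "nrm a b c"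
  shows "BX (blk a b c u) \<beta> = of_real (a \<beta>) * BX u \<beta> + of_real (b \<beta>) * BY u \<beta>"
proof (cases "snd \<beta> = 0")
  case True then show ?thesis using assms by (cases \<beta>) (simp add: nrm_def BX_def shX_def)
next
  case False
  then have "(fst \<beta>, snd \<beta> - 1 + 1) = \<beta>" by simp
  then show ?thesis using False by (simp add: BX_def shX_def blk_def)
qed

lemma BY_blk: assumes "nrm a b c"
  shows "BY (blk a b c u) \<beta> = of_real (b \<beta>) * BX u \<beta> + of_real (c \<beta>) * BY u \<beta>"
proof (cases "fst \<beta> = 0")
  case True then show ?thesis using assms by (cases \<beta>) (simp add: nrm_def BY_def shY_def)
next
  case False
  then have "(fst \<beta> - 1 + 1, snd \<beta>) = \<beta>" by simp
  then show ?thesis using False by (simp add: BY_def shY_def blk_def)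
qed

lemma BX_add2: "BX (add2 u v) \<beta> = BX u \<beta> + BX v \<beta>" by (simp add: BX_def shX_def add2_def)
lemma BY_add2: "BY (add2 u v) \<beta> = BY u \<beta> + BY v \<beta>" by (simp add: BY_def shY_def add2_def)
lemma BX_scale2: "BX (scale2 c u) \<beta> = c * BX u \<beta>" by (simp add: BX_def shX_def scale2_def)
lemma BY_scale2: "BY (scale2 c u) \<beta> = c * BY u \<beta>" by (simp add: BY_def shY_def scale2_def)

lemma blk_add: "nrm a b c \<Longrightarrow> blk a b c (add2 u v) = add2 (blk a b c u) (blk a b c v)"
  by (rule B_ext) (simp_all add: BX_blk BY_blk BX_add2 BY_add2 algebra_simps)
lemma blk_scale: "nrm a b c \<Longrightarrow> blk a b c (scale2 s u) = scale2 s (blk a b c u)"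
  by (rule B_ext) (simp_all add: BX_blk BY_blk BX_scale2 BY_scale2 algebra_simps)

lemma blk_comp: assumes n: "nrm a b c"
  shows "blk a b c (blk a b c u) = blk (\<lambda>\<beta>. (a \<beta>)\<^sup>2 + (b \<beta>)\<^sup>2) (\<lambda>\<beta>. b \<beta> * (a \<beta> + c \<beta>)) (\<lambda>\<beta>. (b \<beta>)\<^sup>2 + (c \<beta>)\<^sup>2) u"
proof -
  have n2: "nrm (\<lambda>\<beta>. (a \<beta>)\<^sup>2 + (b \<beta>)\<^sup>2) (\<lambda>\<beta>. b \<beta> * (a \<beta> + c \<beta>)) (\<lambda>\<beta>. (b \<beta>)\<^sup>2 + (c \<beta>)\<^sup>2)"
    using n by (simp add: nrm_def)
  show ?thesis
  proof (rule B_ext)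
    fix \<beta>
    show "BX (blk a b c (blk a b c u)) \<beta> = BX (blk (\<lambda>\<beta>. (a \<beta>)\<^sup>2 + (b \<beta>)\<^sup>2) (\<lambda>\<beta>. b \<beta> * (a \<beta> + c \<beta>)) (\<lambda>\<beta>. (b \<beta>)\<^sup>2 + (c \<beta>)\<^sup>2) u) \<beta>"
      unfolding BX_blk[OF n2] BX_blk[OF n] BY_blk[OF n] by (simp add: algebra_simps power2_eq_square)
    show "BY (blk a b c (blk a b c u)) \<beta> = BY (blk (\<lambda>\<beta>. (a \<beta>)\<^sup>2 + (b \<beta>)\<^sup>2) (\<lambda>\<beta>. b \<beta> * (a \<beta> + c \<beta>)) (\<lambda>\<beta>. (b \<beta>)\<^sup>2 + (c \<beta>)\<^sup>2) u) \<beta>"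
      unfolding BY_blk[OF n2] BX_blk[OF n] BY_blk[OF n] by (simp add: algebra_simps power2_eq_square)
  qed
qed


lemma cb: assumes "\<bar>a\<bar> \<le> K" "\<bar>b\<bar> \<le> K"
  shows "(cmod (of_real a * X + of_real b * Y))\<^sup>2 \<le> 2 * K\<^sup>2 * ((cmod X)\<^sup>2 + (cmod Y)\<^sup>2)"
proof -
  have K0: "K \<ge> 0" using assms(1) by linarith
  have "cmod (of_real a * X + of_real b * Y) \<le> \<bar>a\<bar> * cmod X + \<bar>b\<bar> * cmod Y"
    by (metis norm_mult norm_of_real norm_triangle_ineq)
  also have "\<dots> \<le> K * cmod X + K * cmod Y"
    using assms by (intro add_mono mult_right_mono) auto
  finally have h: "cmod (of_real a * X + of_real b * Y) \<le> K * (cmod X + cmod Y)" by (simp add: algebra_simps)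
  have "(cmod (of_real a * X + of_real b * Y))\<^sup>2 \<le> (K * (cmod X + cmod Y))\<^sup>2"
    using h by (intro power_mono) auto
  also have "\<dots> = K\<^sup>2 * (cmod X + cmod Y)\<^sup>2" by (simp add: power_mult_distrib)
  also have "\<dots> \<le> K\<^sup>2 * (2 * ((cmod X)\<^sup>2 + (cmod Y)\<^sup>2))"
    using ab2_le_sq[of "cmod X" "cmod Y"] by (intro mult_left_mono) (auto simp: power2_sum)
  finally show ?thesis by (simp add: algebra_simps)
qed

definition bnd :: "real \<Rightarrow> (nat \<times> nat \<Rightarrow> real) \<Rightarrow> (nat \<times> nat \<Rightarrow> real) \<Rightarrow> (nat \<times> nat \<Rightarrow> real) \<Rightarrow> bool" where
  "bnd K a b c \<longleftrightarrow> (\<forall>\<beta>. \<bar>a \<beta>\<bar> \<le> K \<and> \<bar>b \<beta>\<bar> \<le> K \<and> \<bar>c \<beta>\<bar> \<le> K)"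

lemma blk_H2: assumes n: "nrm a b c" and B: "bnd K a b c" and u: "u \<in> H2"
  shows "blk a b c u \<in> H2"
proof -
  have sx: "(\<lambda>\<beta>. (cmod (BX u \<beta>))\<^sup>2) summable_on UNIV" and sy: "(\<lambda>\<beta>. (cmod (BY u \<beta>))\<^sup>2) summable_on UNIV"
    using u by (auto simp: H2_B)
  have s: "(\<lambda>\<beta>. 2 * K\<^sup>2 * ((cmod (BX u \<beta>))\<^sup>2 + (cmod (BY u \<beta>))\<^sup>2)) summable_on UNIV"
    using sx sy by (intro summable_on_cmult_right summable_on_add)
  have "(\<lambda>\<beta>. (cmod (BX (blk a b c u) \<beta>))\<^sup>2) summable_on UNIV"
    by (rule summable_on_comparison_test[OF s]) (use B in \<open>auto simp: BX_blk[OF n] bnd_def intro!: cb\<close>)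
  moreover have "(\<lambda>\<beta>. (cmod (BY (blk a b c u) \<beta>))\<^sup>2) summable_on UNIV"
    by (rule summable_on_comparison_test[OF s]) (use B in \<open>auto simp: BY_blk[OF n] bnd_def intro!: cb\<close>)
  ultimately show ?thesis by (simp add: H2_B)
qed

lemma blk_norm: assumes n: "nrm a b c" and B: "bnd K a b c" and u: "u \<in> H2"
  shows "H2_norm (blk a b c u) \<le> (2 * K) * H2_norm u"
proof -
  have K0: "K \<ge> 0" using B by (auto simp: bnd_def) (meson abs_ge_zero order_trans)
  have bu: "blk a b c u \<in> H2" using blk_H2[OF n B u] .
  have sx: "(\<lambda>\<beta>. (cmod (BX u \<beta>))\<^sup>2) summable_on UNIV" and sy: "(\<lambda>\<beta>. (cmod (BY u \<beta>))\<^sup>2) summable_on UNIV"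
    using u by (auto simp: H2_B)
  have fbx: "(\<lambda>\<beta>. (cmod (BX (blk a b c u) \<beta>))\<^sup>2) summable_on UNIV" and fby: "(\<lambda>\<beta>. (cmod (BY (blk a b c u) \<beta>))\<^sup>2) summable_on UNIV"
    using bu by (auto simp: H2_B)
  have "Re (H2_inner (blk a b c u) (blk a b c u)) = infsum (\<lambda>\<beta>. (cmod (BX (blk a b c u) \<beta>))\<^sup>2 + (cmod (BY (blk a b c u) \<beta>))\<^sup>2) UNIV"
    using H2_normsq_B[OF bu] .
  also have "\<dots> \<le> infsum (\<lambda>\<beta>. (4 * K\<^sup>2) * ((cmod (BX u \<beta>))\<^sup>2 + (cmod (BY u \<beta>))\<^sup>2)) UNIV"
  proof (rule infsum_mono)
    show "(\<lambda>\<beta>. (cmod (BX (blk a b c u) \<beta>))\<^sup>2 + (cmod (BY (blk a b c u) \<beta>))\<^sup>2) summable_on UNIV"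
      using fbx fby by (rule summable_on_add)
    show "(\<lambda>\<beta>. (4 * K\<^sup>2) * ((cmod (BX u \<beta>))\<^sup>2 + (cmod (BY u \<beta>))\<^sup>2)) summable_on UNIV"
      using sx sy by (intro summable_on_cmult_right summable_on_add)
    fix \<beta>
    have Bb: "\<bar>a \<beta>\<bar> \<le> K" "\<bar>b \<beta>\<bar> \<le> K" "\<bar>c \<beta>\<bar> \<le> K" using B unfolding bnd_def by blast+
    have "(cmod (BX (blk a b c u) \<beta>))\<^sup>2 \<le> 2 * K\<^sup>2 * ((cmod (BX u \<beta>))\<^sup>2 + (cmod (BY u \<beta>))\<^sup>2)"
      unfolding BX_blk[OF n] using Bb by (intro cb)
    moreover have "(cmod (BY (blk a b c u) \<beta>))\<^sup>2 \<le> 2 * K\<^sup>2 * ((cmod (BX u \<beta>))\<^sup>2 + (cmod (BY u \<beta>))\<^sup>2)"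
      unfolding BY_blk[OF n] using Bb by (intro cb)
    ultimately show "(cmod (BX (blk a b c u) \<beta>))\<^sup>2 + (cmod (BY (blk a b c u) \<beta>))\<^sup>2
        \<le> (4 * K\<^sup>2) * ((cmod (BX u \<beta>))\<^sup>2 + (cmod (BY u \<beta>))\<^sup>2)" by simp
  qed
  also have "\<dots> = (4 * K\<^sup>2) * infsum (\<lambda>\<beta>. (cmod (BX u \<beta>))\<^sup>2 + (cmod (BY u \<beta>))\<^sup>2) UNIV"
    by (rule infsum_cmult_right) (use sx sy in \<open>intro summable_on_add\<close>)
  also have "\<dots> = (4 * K\<^sup>2) * Re (H2_inner u u)" using H2_normsq_B[OF u] by simp
  finally have h: "Re (H2_inner (blk a b c u) (blk a b c u)) \<le> (2 * K)\<^sup>2 * Re (H2_inner u u)"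
    by (simp add: power_mult_distrib)
  have "H2_norm (blk a b c u) \<le> sqrt ((2 * K)\<^sup>2 * Re (H2_inner u u))"
    unfolding H2_norm_def using h by (rule real_sqrt_le_mono)
  also have "\<dots> = (2 * K) * H2_norm u" using K0 by (simp add: H2_norm_def real_sqrt_mult)
  finally show ?thesis .
qed

lemma quad: fixes a b c x y :: real assumes "a \<ge> 0" "c \<ge> 0" "b\<^sup>2 \<le> a * c"
  shows "a * x\<^sup>2 + 2 * b * x * y + c * y\<^sup>2 \<ge> 0"
proof (cases "a = 0")
  case True
  then have "b = 0" using assms by simp
  then show ?thesis using True assms by simp
next
  case False
  then have a0: "a > 0" using assms by simp
  have "a * (a * x\<^sup>2 + 2 * b * x * y + c * y\<^sup>2) = (a * x + b * y)\<^sup>2 + (a * c - b\<^sup>2) * y\<^sup>2"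
    by (simp add: power2_eq_square algebra_simps)
  also have "\<dots> \<ge> 0" using assms by simp
  finally show ?thesis using a0 by (simp add: zero_le_mult_iff)
qed

lemma psd_pt: fixes a b c :: real assumes "a \<ge> 0" "c \<ge> 0" "b\<^sup>2 \<le> a * c"
  shows "Re ((of_real a * X + of_real b * Y) * cnj X + (of_real b * X + of_real c * Y) * cnj Y) \<ge> 0"
    and "Im ((of_real a * X + of_real b * Y) * cnj X + (of_real b * X + of_real c * Y) * cnj Y) = 0"
proof -
  have "Re ((of_real a * X + of_real b * Y) * cnj X + (of_real b * X + of_real c * Y) * cnj Y)
     = (a * (Re X)\<^sup>2 + 2 * b * (Re X) * (Re Y) + c * (Re Y)\<^sup>2) + (a * (Im X)\<^sup>2 + 2 * b * (Im X) * (Im Y) + c * (Im Y)\<^sup>2)"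
    by (simp add: algebra_simps power2_eq_square)
  also have "\<dots> \<ge> 0" using quad[OF assms, of "Re X" "Re Y"] quad[OF assms, of "Im X" "Im Y"] by linarith
  finally show "Re ((of_real a * X + of_real b * Y) * cnj X + (of_real b * X + of_real c * Y) * cnj Y) \<ge> 0" .
  show "Im ((of_real a * X + of_real b * Y) * cnj X + (of_real b * X + of_real c * Y) * cnj Y) = 0"
    by (simp add: algebra_simps)
qed

definition psd :: "(nat \<times> nat \<Rightarrow> real) \<Rightarrow> (nat \<times> nat \<Rightarrow> real) \<Rightarrow> (nat \<times> nat \<Rightarrow> real) \<Rightarrow> bool" where
  "psd a b c \<longleftrightarrow> (\<forall>\<beta>. a \<beta> \<ge> 0 \<and> c \<beta> \<ge> 0 \<and> (b \<beta>)\<^sup>2 \<le> a \<beta> * c \<beta>)"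

lemma blk_pos: assumes n: "nrm a b c" and B: "bnd K a b c" and p: "psd a b c" and u: "u \<in> H2"
  shows "Im (H2_inner (blk a b c u) u) = 0 \<and> Re (H2_inner (blk a b c u) u) \<ge> 0"
proof -
  have bu: "blk a b c u \<in> H2" using blk_H2[OF n B u] .
  define fX where "fX = (\<lambda>\<beta>. BX (blk a b c u) \<beta> * cnj (BX u \<beta>))"
  define fY where "fY = (\<lambda>\<beta>. BY (blk a b c u) \<beta> * cnj (BY u \<beta>))"
  have sX: "fX summable_on UNIV" unfolding fX_def using H2_prodX[OF bu u] .
  have sY: "fY summable_on UNIV" unfolding fY_def using H2_prodY[OF bu u] .
  have e: "H2_inner (blk a b c u) u = infsum fX UNIV + infsum fY UNIV"
    unfolding fX_def fY_def by (rule H2_inner_B)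
  have pt: "Re (fX \<beta> + fY \<beta>) \<ge> 0 \<and> Im (fX \<beta> + fY \<beta>) = 0" for \<beta>
  proof -
    have "fX \<beta> + fY \<beta> = (of_real (a \<beta>) * BX u \<beta> + of_real (b \<beta>) * BY u \<beta>) * cnj (BX u \<beta>)
        + (of_real (b \<beta>) * BX u \<beta> + of_real (c \<beta>) * BY u \<beta>) * cnj (BY u \<beta>)"
      by (simp add: fX_def fY_def BX_blk[OF n] BY_blk[OF n])
    note eq = this
    have h: "a \<beta> \<ge> 0" "c \<beta> \<ge> 0" "(b \<beta>)\<^sup>2 \<le> a \<beta> * c \<beta>" using p unfolding psd_def by blast+
    show ?thesis unfolding eq by (intro conjI psd_pt[OF h])
  qed
  have "Im (H2_inner (blk a b c u) u) = infsum (\<lambda>\<beta>. Im (fX \<beta>)) UNIV + infsum (\<lambda>\<beta>. Im (fY \<beta>)) UNIV"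
    using e sX sY by (simp add: infsum_Im)
  also have "\<dots> = infsum (\<lambda>\<beta>. Im (fX \<beta> + fY \<beta>)) UNIV"
    using sX sY by (simp add: infsum_add summable_on_Im)
  also have "\<dots> = 0" using pt by simp
  finally have i: "Im (H2_inner (blk a b c u) u) = 0" .
  have "Re (H2_inner (blk a b c u) u) = infsum (\<lambda>\<beta>. Re (fX \<beta>)) UNIV + infsum (\<lambda>\<beta>. Re (fY \<beta>)) UNIV"
    using e sX sY by (simp add: infsum_Re)
  also have "\<dots> = infsum (\<lambda>\<beta>. Re (fX \<beta> + fY \<beta>)) UNIV"
    using sX sY by (simp add: infsum_add summable_on_Re)
  also have "\<dots> \<ge> 0" using pt by (intro infsum_nonneg) auto
  finally show ?thesis using i by simp
qed



lemma sq2: fixes a b c :: real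
  assumes a: "a \<ge> 0" and c: "c \<ge> 0" and bc: "b\<^sup>2 \<le> a * c"
  defines "d \<equiv> sqrt (a * c - b\<^sup>2)" and "\<tau> \<equiv> sqrt (a + c + 2 * sqrt (a * c - b\<^sup>2))"
  shows "((a + d) / \<tau>)\<^sup>2 + (b / \<tau>)\<^sup>2 = a"
    and "(b / \<tau>) * ((a + d) / \<tau> + (c + d) / \<tau>) = b"
    and "(b / \<tau>)\<^sup>2 + ((c + d) / \<tau>)\<^sup>2 = c"
    and "(a + d) / \<tau> \<ge> 0" and "(c + d) / \<tau> \<ge> 0"
    and "(b / \<tau>)\<^sup>2 \<le> ((a + d) / \<tau>) * ((c + d) / \<tau>)"
proof -
  have nn: "0 \<le> a * c - b\<^sup>2" using bc by simp
  have d0: "d \<ge> 0" unfolding d_def using nn by simp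
  have "d * d = a * c - b\<^sup>2" unfolding d_def using nn by simp
  then have dd: "d * d = a * c - b * b" by (simp add: power2_eq_square)
  have td: "\<tau> = sqrt (a + c + 2 * d)" by (simp add: \<tau>_def d_def)
  have t0: "\<tau> \<ge> 0" using a c d0 by (simp add: td)
  have tt: "\<tau> * \<tau> = a + c + 2 * d" using a c d0 by (simp add: td)
  have bb: "b * b \<le> (a + d) * (c + d)"
  proof -
    have "(a + d) * (c + d) = a * c + d * (a + c) + d * d" by (simp add: algebra_simps)
    also have "\<dots> \<ge> a * c"
    proof -
      have "d * (a + c) \<ge> 0" using a c d0 by simp
      moreover have "d * d \<ge> 0" using d0 by simp
      ultimately show ?thesis by linarith
    qed
    finally show ?thesis using bc by (simp add: power2_eq_square)
  qed
  show "(a + d) / \<tau> \<ge> 0" "(c + d) / \<tau> \<ge> 0" using a c d0 t0 by simp_all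
  show "(b / \<tau>)\<^sup>2 \<le> ((a + d) / \<tau>) * ((c + d) / \<tau>)"
    using bb by (simp add: power2_eq_square divide_right_mono)
  define A where "A = (((a + d) / \<tau>)\<^sup>2 + (b / \<tau>)\<^sup>2 = a)"
  define B where "B = ((b / \<tau>) * ((a + d) / \<tau> + (c + d) / \<tau>) = b)"
  define C where "C = ((b / \<tau>)\<^sup>2 + ((c + d) / \<tau>)\<^sup>2 = c)"
  have "A \<and> B \<and> C"
  proof (cases "\<tau> = 0")
    case True
    then have "a + c + 2 * d = 0" using tt by simp
    then have z: "a = 0" "c = 0" "d = 0" using a c d0 by linarith+
    then have "b = 0" using dd by simp
    with z True show ?thesis unfolding A_def B_def C_def by simp
  next
    case False
    then have tp: "\<tau> > 0" using t0 by linarith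
    have e1: "(a + d) * (a + d) + b * b = a * (\<tau> * \<tau>)" using dd unfolding tt by algebra
    have e2: "b * ((a + d) + (c + d)) = b * (\<tau> * \<tau>)" unfolding tt by algebra
    have e3: "b * b + (c + d) * (c + d) = c * (\<tau> * \<tau>)" using dd unfolding tt by algebra
    have A using tp e1 unfolding A_def by (simp add: power2_eq_square field_simps)
    moreover have B using tp e2 unfolding B_def by (simp add: field_simps, algebra)
    moreover have C using tp e3 unfolding C_def by (simp add: power2_eq_square field_simps)
    ultimately show ?thesis by blast
  qed
  then show "((a + d) / \<tau>)\<^sup>2 + (b / \<tau>)\<^sup>2 = a"
    and "(b / \<tau>) * ((a + d) / \<tau> + (c + d) / \<tau>) = b"
    and "(b / \<tau>)\<^sup>2 + ((c + d) / \<tau>)\<^sup>2 = c"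
    unfolding A_def B_def C_def by blast+
qed

definition qd :: "(nat \<times> nat \<Rightarrow> real) \<Rightarrow> (nat \<times> nat \<Rightarrow> real) \<Rightarrow> (nat \<times> nat \<Rightarrow> real) \<Rightarrow> nat \<times> nat \<Rightarrow> real" where
  "qd a b c \<beta> = sqrt (a \<beta> * c \<beta> - (b \<beta>)\<^sup>2)"
definition qt :: "(nat \<times> nat \<Rightarrow> real) \<Rightarrow> (nat \<times> nat \<Rightarrow> real) \<Rightarrow> (nat \<times> nat \<Rightarrow> real) \<Rightarrow> nat \<times> nat \<Rightarrow> real" where
  "qt a b c \<beta> = sqrt (a \<beta> + c \<beta> + 2 * qd a b c \<beta>)"
definition qa :: "(nat \<times> nat \<Rightarrow> real) \<Rightarrow> (nat \<times> nat \<Rightarrow> real) \<Rightarrow> (nat \<times> nat \<Rightarrow> real) \<Rightarrow> nat \<times> nat \<Rightarrow> real" where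
  "qa a b c \<beta> = (a \<beta> + qd a b c \<beta>) / qt a b c \<beta>"
definition qb :: "(nat \<times> nat \<Rightarrow> real) \<Rightarrow> (nat \<times> nat \<Rightarrow> real) \<Rightarrow> (nat \<times> nat \<Rightarrow> real) \<Rightarrow> nat \<times> nat \<Rightarrow> real" where
  "qb a b c \<beta> = b \<beta> / qt a b c \<beta>"
definition qc :: "(nat \<times> nat \<Rightarrow> real) \<Rightarrow> (nat \<times> nat \<Rightarrow> real) \<Rightarrow> (nat \<times> nat \<Rightarrow> real) \<Rightarrow> nat \<times> nat \<Rightarrow> real" where
  "qc a b c \<beta> = (c \<beta> + qd a b c \<beta>) / qt a b c \<beta>"

lemma q_props: assumes p: "psd a b c"
  shows "(qa a b c \<beta>)\<^sup>2 + (qb a b c \<beta>)\<^sup>2 = a \<beta>"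
    and "qb a b c \<beta> * (qa a b c \<beta> + qc a b c \<beta>) = b \<beta>"
    and "(qb a b c \<beta>)\<^sup>2 + (qc a b c \<beta>)\<^sup>2 = c \<beta>"
    and "qa a b c \<beta> \<ge> 0" and "qc a b c \<beta> \<ge> 0"
    and "(qb a b c \<beta>)\<^sup>2 \<le> qa a b c \<beta> * qc a b c \<beta>"
proof -
  have h: "a \<beta> \<ge> 0" "c \<beta> \<ge> 0" "(b \<beta>)\<^sup>2 \<le> a \<beta> * c \<beta>" using p unfolding psd_def by blast+
  note r = sq2[OF h]
  show "(qa a b c \<beta>)\<^sup>2 + (qb a b c \<beta>)\<^sup>2 = a \<beta>"
    and "qb a b c \<beta> * (qa a b c \<beta> + qc a b c \<beta>) = b \<beta>"
    and "(qb a b c \<beta>)\<^sup>2 + (qc a b c \<beta>)\<^sup>2 = c \<beta>"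
    and "qa a b c \<beta> \<ge> 0" and "qc a b c \<beta> \<ge> 0"
    and "(qb a b c \<beta>)\<^sup>2 \<le> qa a b c \<beta> * qc a b c \<beta>"
    unfolding qa_def qb_def qc_def qt_def qd_def by (rule r(1), rule r(2), rule r(3), rule r(4), rule r(5), rule r(6))
qed

lemma q_nrm: assumes n: "nrm a b c" shows "nrm (qa a b c) (qb a b c) (qc a b c)"
  unfolding nrm_def
proof (intro conjI allI impI)
  fix \<beta> :: "nat \<times> nat"
  assume "snd \<beta> = 0"
  then have "a \<beta> = 0" "b \<beta> = 0" using n unfolding nrm_def by blast+
  then show "qa a b c \<beta> = 0" "qb a b c \<beta> = 0" unfolding qa_def qb_def qd_def by simp_all
next
  fix \<beta> :: "nat \<times> nat"
  assume "fst \<beta> = 0"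
  then have "c \<beta> = 0" "b \<beta> = 0" using n unfolding nrm_def by blast+
  then show "qc a b c \<beta> = 0" "qb a b c \<beta> = 0" unfolding qc_def qb_def qd_def by simp_all
qed

lemma q_psd: "psd a b c \<Longrightarrow> psd (qa a b c) (qb a b c) (qc a b c)"
  using q_props(4,5,6) unfolding psd_def by blast

lemma sq_abs: assumes "x\<^sup>2 + y\<^sup>2 = (z::real)" "z \<le> K" shows "\<bar>x\<bar> \<le> sqrt K"
proof -
  have "x\<^sup>2 \<le> K" using assms zero_le_power2[of y] by linarith
  then have "sqrt (x\<^sup>2) \<le> sqrt K" by (rule real_sqrt_le_mono)
  then show ?thesis by simp
qed

lemma q_bnd: assumes p: "psd a b c" and B: "bnd K a b c" shows "bnd (sqrt K) (qa a b c) (qb a b c) (qc a b c)"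
  unfolding bnd_def
proof
  fix \<beta>
  have Bb: "\<bar>a \<beta>\<bar> \<le> K" "\<bar>c \<beta>\<bar> \<le> K" using B unfolding bnd_def by blast+
  have a1: "a \<beta> \<le> K" "c \<beta> \<le> K" using Bb by linarith+
  note qp = q_props[OF p, of \<beta>]
  show "\<bar>qa a b c \<beta>\<bar> \<le> sqrt K \<and> \<bar>qb a b c \<beta>\<bar> \<le> sqrt K \<and> \<bar>qc a b c \<beta>\<bar> \<le> sqrt K"
  proof (intro conjI)
    show "\<bar>qa a b c \<beta>\<bar> \<le> sqrt K" using sq_abs[OF qp(1) a1(1)] .
    show "\<bar>qb a b c \<beta>\<bar> \<le> sqrt K" using sq_abs[OF qp(3) a1(2)] .
    show "\<bar>qc a b c \<beta>\<bar> \<le> sqrt K" using sq_abs[of "qc a b c \<beta>" "qb a b c \<beta>" "c \<beta>" K] qp(3) a1(2) by (simp add: add.commute)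
  qed
qed

definition S0 :: "(nat \<times> nat \<Rightarrow> real) \<Rightarrow> (nat \<times> nat \<Rightarrow> real) \<Rightarrow> (nat \<times> nat \<Rightarrow> real) \<Rightarrow> vec \<times> vec \<Rightarrow> vec \<times> vec" where
  "S0 a b c u = (if u \<in> H2 then blk (qa a b c) (qb a b c) (qc a b c) u else z0)"

lemma basis_blk:
  assumes n: "nrm a b c" and P: "\<forall>u\<in>H2. P u = blk a b c u" and p: "psd a b c" and B: "bnd K a b c"
    and e: "e \<in> H2" and supp: "\<And>\<beta>. \<beta> \<noteq> \<beta>0 \<Longrightarrow> BX e \<beta> = 0 \<and> BY e \<beta> = 0"
  shows "basis_ok P e"
proof -
  define t where "t = a \<beta>0 + c \<beta>0"
  define \<delta> where "\<delta> = a \<beta>0 * c \<beta>0 - (b \<beta>0)\<^sup>2"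
  have h: "a \<beta>0 \<ge> 0" "c \<beta>0 \<ge> 0" "(b \<beta>0)\<^sup>2 \<le> a \<beta>0 * c \<beta>0" using p unfolding psd_def by blast+
  have t0: "t \<ge> 0" and d0: "\<delta> \<ge> 0" using h by (simp_all add: t_def \<delta>_def)
  have Pe: "P e = blk a b c e" using P e by simp
  have be: "blk a b c e \<in> H2" using blk_H2[OF n B e] .
  have PPe: "P (P e) = blk a b c (blk a b c e)" using P be Pe by simp
  have "blk a b c (blk a b c e) = add2 (scale2 (of_real t) (blk a b c e)) (scale2 (of_real (- \<delta>)) e)"
  proof (rule B_ext)
    fix \<beta>
    show "BX (blk a b c (blk a b c e)) \<beta> = BX (add2 (scale2 (of_real t) (blk a b c e)) (scale2 (of_real (- \<delta>)) e)) \<beta>"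
    proof (cases "\<beta> = \<beta>0")
      case True
      then show ?thesis unfolding BX_add2 BX_scale2 BX_blk[OF n] BY_blk[OF n]
        by (simp add: t_def \<delta>_def algebra_simps power2_eq_square)
    next
      case False
      then show ?thesis using supp[OF False] unfolding BX_add2 BX_scale2 BX_blk[OF n] BY_blk[OF n] by simp
    qed
    show "BY (blk a b c (blk a b c e)) \<beta> = BY (add2 (scale2 (of_real t) (blk a b c e)) (scale2 (of_real (- \<delta>)) e)) \<beta>"
    proof (cases "\<beta> = \<beta>0")
      case True
      then show ?thesis unfolding BY_add2 BY_scale2 BX_blk[OF n] BY_blk[OF n]
        by (simp add: t_def \<delta>_def algebra_simps power2_eq_square)
    next
      case False
      then show ?thesis using supp[OF False] unfolding BY_add2 BY_scale2 BX_blk[OF n] BY_blk[OF n] by simp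
    qed
  qed
  then have "P (P e) = add2 (scale2 (of_real t) (P e)) (scale2 (of_real (- \<delta>)) e)"
    using PPe Pe by simp
  then show ?thesis unfolding basis_ok_def using t0 d0 by blast
qed

lemma suppX: "\<beta> \<noteq> (fst k, snd k + 1) \<Longrightarrow> BX (dlt k, \<lambda>_. 0) \<beta> = 0 \<and> BY (dlt k, \<lambda>_. 0) \<beta> = 0"
  by (cases \<beta>) (auto simp: BX_def BY_def shX_def shY_def dlt_def)
lemma suppY: "\<beta> \<noteq> (fst k + 1, snd k) \<Longrightarrow> BX (\<lambda>_. 0, dlt k) \<beta> = 0 \<and> BY (\<lambda>_. 0, dlt k) \<beta> = 0"
  by (cases \<beta>) (auto simp: BX_def BY_def shX_def shY_def dlt_def)

theorem op_sqrt_blk: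
  assumes n: "nrm a b c" and P: "\<forall>u\<in>H2. P u = blk a b c u" and p: "psd a b c" and B: "bnd K a b c"
  shows "op_sqrt P = S0 a b c"
proof (rule op_sqrt_eq)
  have qn: "nrm (qa a b c) (qb a b c) (qc a b c)" using q_nrm[OF n] .
  have qB: "bnd (sqrt K) (qa a b c) (qb a b c) (qc a b c)" using q_bnd[OF p B] .
  have qp: "psd (qa a b c) (qb a b c) (qc a b c)" using q_psd[OF p] .
  show "bounded_op2 (S0 a b c)"
    unfolding bounded_op2_def
  proof (intro conjI ballI allI)
    fix u assume u: "u \<in> H2"
    show "S0 a b c u \<in> H2" using u blk_H2[OF qn qB u] by (simp add: S0_def)
  next
    fix u v assume u: "u \<in> H2" and v: "v \<in> H2"
    show "S0 a b c (add2 u v) = add2 (S0 a b c u) (S0 a b c v)"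
      using u v add2_H2[OF u v] by (simp add: S0_def blk_add[OF qn])
  next
    fix s u assume u: "u \<in> H2"
    show "S0 a b c (scale2 s u) = scale2 s (S0 a b c u)"
      using u scale2_H2[OF u] by (simp add: S0_def blk_scale[OF qn])
  next
    show "\<exists>C. \<forall>u\<in>H2. H2_norm (S0 a b c u) \<le> C * H2_norm u"
    proof (rule exI[where x="2 * sqrt K"], intro ballI)
      fix u assume u: "u \<in> H2"
      show "H2_norm (S0 a b c u) \<le> (2 * sqrt K) * H2_norm u"
        using blk_norm[OF qn qB u] u by (simp add: S0_def)
    qed
  qed
  show "pos_op2 (S0 a b c)"
    unfolding pos_op2_def using blk_pos[OF qn qB qp] by (simp add: S0_def)
  show "\<forall>u. u \<notin> H2 \<longrightarrow> S0 a b c u = z0" by (simp add: S0_def)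
  show "\<forall>u\<in>H2. S0 a b c (S0 a b c u) = P u"
  proof
    fix u assume u: "u \<in> H2"
    have "S0 a b c (S0 a b c u) = blk (qa a b c) (qb a b c) (qc a b c) (blk (qa a b c) (qb a b c) (qc a b c) u)"
      using u blk_H2[OF qn qB u] by (simp add: S0_def)
    also have "\<dots> = blk a b c u"
      unfolding blk_comp[OF qn] using q_props[OF p] by simp
    finally show "S0 a b c (S0 a b c u) = P u" using P u by simp
  qed
  fix k
  show "basis_ok P (dlt k, \<lambda>_. 0)" using basis_blk[OF n P p B dltX_H2 suppX] .
  show "basis_ok P (\<lambda>_. 0, dlt k)" using basis_blk[OF n P p B dltY_H2 suppY] .
qed



definition w1 :: "nat \<times> nat \<Rightarrow> real" where
  "w1 k = sqrt (real (fst k + 1) / real (fst k + snd k + 1))"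
definition w2 :: "nat \<times> nat \<Rightarrow> real" where
  "w2 k = sqrt (real (snd k + 1) / real (fst k + snd k + 1))"

lemma w1_nn: "w1 k \<ge> 0" by (simp add: w1_def)
lemma w2_nn: "w2 k \<ge> 0" by (simp add: w2_def)
lemma w1_le: "w1 k \<le> 1" by (simp add: w1_def)
lemma w2_le: "w2 k \<le> 1" by (simp add: w2_def)
lemma w1_sq: "(w1 k)\<^sup>2 = real (fst k + 1) / real (fst k + snd k + 1)" by (simp add: w1_def)
lemma w2_sq: "(w2 k)\<^sup>2 = real (snd k + 1) / real (fst k + snd k + 1)" by (simp add: w2_def)

lemma DA1_eq: "DA1 x = shY (\<lambda>k. complex_of_real (w1 k) * x k)"
proof
  fix j :: "nat \<times> nat"
  obtain j1 j2 where j: "j = (j1, j2)" by fastforce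
  show "DA1 x j = shY (\<lambda>k. complex_of_real (w1 k) * x k) j"
  proof (cases j1)
    case 0 then show ?thesis by (simp add: j DA1_def shY_def)
  next
    case (Suc m)
    have "real (Suc m) / real (Suc m + j2) = real (m + 1) / real (m + j2 + 1)" by simp
    then show ?thesis by (simp add: j Suc DA1_def shY_def w1_def)
  qed
qed

lemma DA2_eq: "DA2 x = shX (\<lambda>k. complex_of_real (w2 k) * x k)"
proof
  fix j :: "nat \<times> nat"
  obtain j1 j2 where j: "j = (j1, j2)" by fastforce
  show "DA2 x j = shX (\<lambda>k. complex_of_real (w2 k) * x k) j"
  proof (cases j2)
    case 0 then show ?thesis by (simp add: j DA2_def shX_def)
  next
    case (Suc m)
    have "real (Suc m) / real (j1 + Suc m) = real (m + 1) / real (j1 + m + 1)" by simp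
    then show ?thesis by (simp add: j Suc DA2_def shX_def w2_def)
  qed
qed

definition DA1s :: "vec \<Rightarrow> vec" where "DA1s y = (\<lambda>k. complex_of_real (w1 k) * y (fst k + 1, snd k))"
definition DA2s :: "vec \<Rightarrow> vec" where "DA2s y = (\<lambda>k. complex_of_real (w2 k) * y (fst k, snd k + 1))"

lemma adj_eq:
  assumes y: "y \<in> l2" and Bl: "B \<in> l2" and H: "\<forall>x\<in>l2. l2_inner (A x) y = l2_inner x B"
  shows "adj A y = B"
proof -
  have "(THE z. z \<in> l2 \<and> (\<forall>x\<in>l2. l2_inner (A x) y = l2_inner x z)) = B"
  proof (rule the_equality)
    show "B \<in> l2 \<and> (\<forall>x\<in>l2. l2_inner (A x) y = l2_inner x B)" using Bl H by blast
    fix z assume z: "z \<in> l2 \<and> (\<forall>x\<in>l2. l2_inner (A x) y = l2_inner x z)"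
    show "z = B"
    proof
      fix j
      have "l2_inner (dlt j) z = l2_inner (dlt j) B" using z H dlt_l2 by metis
      then have "cnj (z j) = cnj (B j)" by (simp add: inner_cnj[of "dlt j"] inner_dlt)
      then show "z j = B j" by simp
    qed
  qed
  then show ?thesis using y by (simp add: adj_def)
qed

lemma shY_sum_shift: assumes "y \<in> l2" shows "(\<lambda>k. (cmod (y (fst k + 1, snd k)))\<^sup>2) summable_on UNIV"
proof -
  have "shY (\<lambda>k. (cmod (y (fst k + 1, snd k)))\<^sup>2) summable_on UNIV"
    by (rule summable_on_comparison_test[of "\<lambda>k. (cmod (y k))\<^sup>2"]) (use assms in \<open>auto simp: l2_def shY_def\<close>)
  then show ?thesis by (simp add: sumY)
qed

lemma shX_sum_shift: assumes "y \<in> l2" shows "(\<lambda>k. (cmod (y (fst k, snd k + 1)))\<^sup>2) summable_on UNIV"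
proof -
  have "shX (\<lambda>k. (cmod (y (fst k, snd k + 1)))\<^sup>2) summable_on UNIV"
    by (rule summable_on_comparison_test[of "\<lambda>k. (cmod (y k))\<^sup>2"]) (use assms in \<open>auto simp: l2_def shX_def\<close>)
  then show ?thesis by (simp add: sumX)
qed

lemma wmul_sq: assumes "0 \<le> w" "w \<le> 1" shows "(cmod (complex_of_real w * z))\<^sup>2 \<le> (cmod z)\<^sup>2"
proof -
  have "cmod (complex_of_real w * z) \<le> cmod z" using assms by (simp add: norm_mult mult_left_le_one_le)
  then show ?thesis by (simp add: power_mono)
qed

lemma w1_mul: "cmod (complex_of_real (w1 k) * z) \<le> cmod z"
  by (simp add: norm_mult w1_nn w1_le mult_left_le_one_le)
lemma w2_mul: "cmod (complex_of_real (w2 k) * z) \<le> cmod z"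
  by (simp add: norm_mult w2_nn w2_le mult_left_le_one_le)

lemma DA1_l2: assumes "x \<in> l2" shows "DA1 x \<in> l2"
proof -
  have "(\<lambda>k. (cmod (complex_of_real (w1 k) * x k))\<^sup>2) summable_on UNIV"
    by (rule summable_on_comparison_test[of "\<lambda>k. (cmod (x k))\<^sup>2"]) (use assms in \<open>auto simp: l2_def intro!: wmul_sq w1_nn w1_le simp: w1_mul\<close>)
  then show ?thesis unfolding DA1_eq l2_def mem_Collect_eq shY_norm sumY .
qed

lemma DA2_l2: assumes "x \<in> l2" shows "DA2 x \<in> l2"
proof -
  have "(\<lambda>k. (cmod (complex_of_real (w2 k) * x k))\<^sup>2) summable_on UNIV"
    by (rule summable_on_comparison_test[of "\<lambda>k. (cmod (x k))\<^sup>2"]) (use assms in \<open>auto simp: l2_def intro!: wmul_sq w2_nn w2_le simp: w2_mul\<close>)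
  then show ?thesis unfolding DA2_eq l2_def mem_Collect_eq shX_norm sumX .
qed

lemma DA1s_l2: assumes "y \<in> l2" shows "DA1s y \<in> l2"
  unfolding l2_def DA1s_def mem_Collect_eq
  by (rule summable_on_comparison_test[OF shY_sum_shift[OF assms]]) (auto intro!: wmul_sq w1_nn w1_le simp: w1_mul)

lemma DA2s_l2: assumes "y \<in> l2" shows "DA2s y \<in> l2"
  unfolding l2_def DA2s_def mem_Collect_eq
  by (rule summable_on_comparison_test[OF shX_sum_shift[OF assms]]) (auto intro!: wmul_sq w2_nn w2_le simp: w2_mul)

lemma DA1_inner: "l2_inner (DA1 x) y = l2_inner x (DA1s y)"
proof -
  have "(\<lambda>j. DA1 x j * cnj (y j)) = shY (\<lambda>k. complex_of_real (w1 k) * x k * cnj (y (fst k + 1, snd k)))"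
    by (auto simp: DA1_eq shY_def fun_eq_iff)
  then show ?thesis unfolding l2_inner_def by (simp add: infY DA1s_def mult_ac)
qed

lemma DA2_inner: "l2_inner (DA2 x) y = l2_inner x (DA2s y)"
proof -
  have "(\<lambda>j. DA2 x j * cnj (y j)) = shX (\<lambda>k. complex_of_real (w2 k) * x k * cnj (y (fst k, snd k + 1)))"
    by (auto simp: DA2_eq shX_def fun_eq_iff)
  then show ?thesis unfolding l2_inner_def by (simp add: infX DA2s_def mult_ac)
qed

lemma adj_DA1: "y \<in> l2 \<Longrightarrow> adj DA1 y = DA1s y"
  by (rule adj_eq) (auto simp: DA1s_l2 DA1_inner)
lemma adj_DA2: "y \<in> l2 \<Longrightarrow> adj DA2 y = DA2s y"
  by (rule adj_eq) (auto simp: DA2s_l2 DA2_inner)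



definition aL :: "nat \<times> nat \<Rightarrow> real" where
  "aL \<beta> = (if snd \<beta> = 0 then 0 else (w1 (fst \<beta>, snd \<beta> - 1))\<^sup>2)"
definition bL :: "nat \<times> nat \<Rightarrow> real" where
  "bL \<beta> = (if fst \<beta> = 0 \<or> snd \<beta> = 0 then 0 else w2 (fst \<beta>, snd \<beta> - 1) * w1 (fst \<beta> - 1, snd \<beta>))"
definition cL :: "nat \<times> nat \<Rightarrow> real" where
  "cL \<beta> = (if fst \<beta> = 0 then 0 else (w2 (fst \<beta> - 1, snd \<beta>))\<^sup>2)"

definition aR :: "nat \<times> nat \<Rightarrow> real" where
  "aR \<beta> = (if fst \<beta> = 0 \<or> snd \<beta> = 0 then 0 else (w1 (fst \<beta> - 1, snd \<beta> - 1))\<^sup>2)"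
definition bR :: "nat \<times> nat \<Rightarrow> real" where
  "bR \<beta> = (if fst \<beta> = 0 \<or> snd \<beta> = 0 then 0 else w1 (fst \<beta> - 1, snd \<beta> - 1) * w2 (fst \<beta> - 1, snd \<beta> - 1))"
definition cR :: "nat \<times> nat \<Rightarrow> real" where
  "cR \<beta> = (if fst \<beta> = 0 \<or> snd \<beta> = 0 then 0 else (w2 (fst \<beta> - 1, snd \<beta> - 1))\<^sup>2)"

lemma L_blk: assumes "u \<in> H2" shows "L_op DA1 DA2 u = blk aL bL cL u"
proof -
  obtain x y where u: "u = (x, y)" by fastforce
  have x: "x \<in> l2" "y \<in> l2" using assms u by (auto simp: H2_mem)
  have "L_op DA1 DA2 u = (\<lambda>k. DA1s (DA1 x) k + DA2s (DA1 y) k, \<lambda>k. DA1s (DA2 x) k + DA2s (DA2 y) k)"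
    using x by (simp add: u L_op_def op_matrix_def adj_DA1 adj_DA2 DA1_l2 DA2_l2)
  also have "\<dots> = blk aL bL cL u"
  proof -
    have "DA1s (DA1 x) (a, b) + DA2s (DA1 y) (a, b) = fst (blk aL bL cL u) (a, b)"
     and "DA1s (DA2 x) (a, b) + DA2s (DA2 y) (a, b) = snd (blk aL bL cL u) (a, b)" for a b
      by (cases a; cases b; simp add: u blk_def DA1s_def DA2s_def DA1_eq DA2_eq shX_def shY_def BX_def BY_def
          aL_def bL_def cL_def power2_eq_square)+
    then show ?thesis by (simp add: prod_eq_iff fun_eq_iff)
  qed
  finally show ?thesis .
qed

lemma R_blk: assumes "u \<in> H2" shows "R_op DA1 DA2 u = blk aR bR cR u"
proof -
  obtain x y where u: "u = (x, y)" by fastforce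
  have x: "x \<in> l2" "y \<in> l2" using assms u by (auto simp: H2_mem)
  have "R_op DA1 DA2 u = (\<lambda>k. DA1 (DA1s x) k + DA1 (DA2s y) k, \<lambda>k. DA2 (DA1s x) k + DA2 (DA2s y) k)"
    using x by (simp add: u R_op_def op_matrix_def adj_DA1 adj_DA2)
  also have "\<dots> = blk aR bR cR u"
  proof -
    have "DA1 (DA1s x) (a, b) + DA1 (DA2s y) (a, b) = fst (blk aR bR cR u) (a, b)"
     and "DA2 (DA1s x) (a, b) + DA2 (DA2s y) (a, b) = snd (blk aR bR cR u) (a, b)" for a b
      by (cases a; cases b; simp add: u blk_def DA1s_def DA2s_def DA1_eq DA2_eq shX_def shY_def BX_def BY_def
          aR_def bR_def cR_def power2_eq_square)+
    then show ?thesis by (simp add: prod_eq_iff fun_eq_iff)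
  qed
  finally show ?thesis .
qed

lemma nrm_L: "nrm aL bL cL" by (simp add: nrm_def aL_def bL_def cL_def)
lemma nrm_R: "nrm aR bR cR" by (simp add: nrm_def aR_def bR_def cR_def)

lemma sq_le1: "0 \<le> w \<Longrightarrow> w \<le> 1 \<Longrightarrow> (w::real)\<^sup>2 \<le> 1"
  by (simp add: power_le_one)
lemma mul_le1: "0 \<le> w \<Longrightarrow> w \<le> 1 \<Longrightarrow> 0 \<le> v \<Longrightarrow> v \<le> (1::real) \<Longrightarrow> w * v \<le> 1"
  by (simp add: mult_le_one)

lemma bnd_L: "bnd 1 aL bL cL"
  unfolding bnd_def aL_def bL_def cL_def
  by (auto intro!: sq_le1 mul_le1 w1_nn w1_le w2_nn w2_le simp: abs_mult w1_nn w2_nn)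
lemma bnd_R: "bnd 1 aR bR cR"
  unfolding bnd_def aR_def bR_def cR_def
  by (auto intro!: sq_le1 mul_le1 w1_nn w1_le w2_nn w2_le simp: abs_mult w1_nn w2_nn)

lemma psd_R: "psd aR bR cR"
  unfolding psd_def aR_def bR_def cR_def by (simp add: power_mult_distrib)

lemma psd_L: "psd aL bL cL"
  unfolding psd_def
proof (intro allI conjI)
  fix \<beta> :: "nat \<times> nat"
  show "aL \<beta> \<ge> 0" "cL \<beta> \<ge> 0" by (simp_all add: aL_def cL_def)
  show "(bL \<beta>)\<^sup>2 \<le> aL \<beta> * cL \<beta>"
  proof (cases "fst \<beta> = 0 \<or> snd \<beta> = 0")
    case True then show ?thesis by (simp add: aL_def bL_def cL_def)
  next
    case False
    then obtain p q where b: "\<beta> = (Suc p, Suc q)" by (cases \<beta>) (metis fst_conv snd_conv not0_implies_Suc)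
    have N: "real (Suc p + q + 1) = real (p + Suc q + 1)" by simp
    have A: "(w2 (Suc p, q))\<^sup>2 \<le> (w2 (p, Suc q))\<^sup>2" unfolding w2_sq using N
      by (simp add: divide_right_mono)
    have B: "(w1 (p, Suc q))\<^sup>2 \<le> (w1 (Suc p, q))\<^sup>2" unfolding w1_sq using N
      by (simp add: divide_right_mono)
    have "(bL \<beta>)\<^sup>2 = (w2 (Suc p, q))\<^sup>2 * (w1 (p, Suc q))\<^sup>2" by (simp add: b bL_def power_mult_distrib)
    also have "\<dots> \<le> (w2 (p, Suc q))\<^sup>2 * (w1 (Suc p, q))\<^sup>2" using A B by (intro mult_mono) auto
    also have "\<dots> = aL \<beta> * cL \<beta>" by (simp add: b aL_def cL_def)
    finally show ?thesis .
  qed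
qed

lemma sqrtL: "op_sqrt (L_op DA1 DA2) = S0 aL bL cL"
  using op_sqrt_blk[OF nrm_L _ psd_L bnd_L] L_blk by blast
lemma sqrtR: "op_sqrt (R_op DA1 DA2) = S0 aR bR cR"
  using op_sqrt_blk[OF nrm_R _ psd_R bnd_R] R_blk by blast



abbreviation u0 :: "vec \<times> vec" where "u0 \<equiv> (dlt (1, 0), dlt (0, 1))"

lemma u0_H2: "u0 \<in> H2" by (simp add: H2_mem dlt_l2)

lemma blk_u0_fst: "fst (blk A B C u0) (1, 0) = of_real (A (1, 1)) + of_real (B (1, 1))"
  by (simp add: blk_def BY_def shY_def dlt_def)
lemma blk_u0_snd: "snd (blk A B C u0) (0, 1) = of_real (B (1, 1)) + of_real (C (1, 1))"
  by (simp add: blk_def BX_def shX_def dlt_def)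

lemma valsL: "aL (1, 1) = 1" "cL (1, 1) = 1" "bL (1, 1) = 1 / 2"
proof -
  show "aL (1, 1) = 1" by (simp add: aL_def w1_sq)
  show "cL (1, 1) = 1" by (simp add: cL_def w2_sq)
  have "bL (1, 1) = sqrt (1 / 2) * sqrt (1 / 2)" by (simp add: bL_def w1_def w2_def)
  also have "\<dots> = 1 / 2" by simp
  finally show "bL (1, 1) = 1 / 2" .
qed

lemma valsR: "aR (1, 1) = 1" "cR (1, 1) = 1" "bR (1, 1) = 1"
  by (simp_all add: aR_def bR_def cR_def w1_def w2_def)

lemma key_ineq:
  fixes s t :: real
  defines "s \<equiv> sqrt (3 / 4)" and "t \<equiv> sqrt (2 + 2 * sqrt (3 / 4))"
  shows "(3 + 2 * s) / t < 4 / sqrt 2"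
proof -
  have s0: "s \<ge> 0" by (simp add: s_def)
  have ss: "s\<^sup>2 = 3 / 4" by (simp add: s_def)
  have tt: "t\<^sup>2 = 2 + 2 * s" using s0 by (simp add: t_def s_def)
  have "0 < 2 + 2 * sqrt (3 / 4 :: real)" using real_sqrt_ge_zero[of "3 / 4 :: real"] by linarith
  then have t0: "t > 0" unfolding t_def by (rule real_sqrt_gt_zero)
  have "((3 + 2 * s) / t)\<^sup>2 = (3 + 2 * s)\<^sup>2 / (2 + 2 * s)" by (simp add: power_divide tt)
  also have "(3 + 2 * s)\<^sup>2 = 12 + 12 * s" using ss by (simp add: power2_eq_square algebra_simps)
  also have "(12 + 12 * s) / (2 + 2 * s) < 8" using s0 by (simp add: divide_less_eq)
  also have "8 = (4 / sqrt 2)\<^sup>2" by (simp add: power_divide)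
  finally have "((3 + 2 * s) / t)\<^sup>2 < (4 / sqrt 2)\<^sup>2" .
  then show ?thesis by (rule power2_less_imp_less) simp
qed

theorem theorem3p18:
  shows "\<not> semi_hyponormal DA1 DA2"
proof
  assume "semi_hyponormal DA1 DA2"
  then have pos: "pos_op2 (diff2 (S0 aL bL cL) (S0 aR bR cR))"
    unfolding semi_hyponormal_def sqrtL sqrtR by blast
  define s where "s = sqrt (3 / 4 :: real)"
  define t where "t = sqrt (2 + 2 * sqrt (3 / 4 :: real))"
  have qL: "qa aL bL cL (1, 1) = (1 + s) / t" "qb aL bL cL (1, 1) = (1 / 2) / t" "qc aL bL cL (1, 1) = (1 + s) / t"
    unfolding qa_def qb_def qc_def qt_def qd_def valsL by (simp_all add: s_def t_def power2_eq_square)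
  have qR: "qa aR bR cR (1, 1) = 1 / sqrt 2" "qb aR bR cR (1, 1) = 1 / sqrt 2" "qc aR bR cR (1, 1) = 1 / sqrt 2"
    unfolding qa_def qb_def qc_def qt_def qd_def valsR by simp_all
  have fL: "fst (S0 aL bL cL u0) (1, 0) = of_real ((1 + s) / t) + of_real ((1 / 2) / t)"
    unfolding S0_def if_P[OF u0_H2] blk_u0_fst qL ..
  have fR: "fst (S0 aR bR cR u0) (1, 0) = of_real (1 / sqrt 2) + of_real (1 / sqrt 2)"
    unfolding S0_def if_P[OF u0_H2] blk_u0_fst qR ..
  have gL: "snd (S0 aL bL cL u0) (0, 1) = of_real ((1 / 2) / t) + of_real ((1 + s) / t)"
    unfolding S0_def if_P[OF u0_H2] blk_u0_snd qL ..
  have gR: "snd (S0 aR bR cR u0) (0, 1) = of_real (1 / sqrt 2) + of_real (1 / sqrt 2)"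
    unfolding S0_def if_P[OF u0_H2] blk_u0_snd qR ..
  have "H2_inner (diff2 (S0 aL bL cL) (S0 aR bR cR) u0) u0
      = (fst (S0 aL bL cL u0) (1, 0) - fst (S0 aR bR cR u0) (1, 0)) + (snd (S0 aL bL cL u0) (0, 1) - snd (S0 aR bR cR u0) (0, 1))"
    unfolding H2_inner_def diff2_def fst_conv snd_conv inner_dlt ..
  also have "\<dots> = of_real (((1 + s) / t + (1 / 2) / t) - (1 / sqrt 2 + 1 / sqrt 2)
                  + (((1 / 2) / t + (1 + s) / t) - (1 / sqrt 2 + 1 / sqrt 2)))"
    unfolding fL fR gL gR by simp
  finally have hE: "H2_inner (diff2 (S0 aL bL cL) (S0 aR bR cR) u0) u0 = of_real (((1 + s) / t + (1 / 2) / t) - (1 / sqrt 2 + 1 / sqrt 2)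
                  + (((1 / 2) / t + (1 + s) / t) - (1 / sqrt 2 + 1 / sqrt 2)))" .
  have E: "((1 + s) / t + (1 / 2) / t) - (1 / sqrt 2 + 1 / sqrt 2)
                  + (((1 / 2) / t + (1 + s) / t) - (1 / sqrt 2 + 1 / sqrt 2)) = (3 + 2 * s) / t - 4 / sqrt 2"
    by (simp add: add_divide_distrib[symmetric] diff_divide_distrib)
  have "Re (H2_inner (diff2 (S0 aL bL cL) (S0 aR bR cR) u0) u0) = (3 + 2 * s) / t - 4 / sqrt 2"
    unfolding hE Re_complex_of_real E ..
  also have "\<dots> < 0" using key_ineq unfolding s_def t_def by simp
  finally have "Re (H2_inner (diff2 (S0 aL bL cL) (S0 aR bR cR) u0) u0) < 0" .
  moreover have "Re (H2_inner (diff2 (S0 aL bL cL) (S0 aR bR cR) u0) u0) \<ge> 0"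
    using pos u0_H2 unfolding pos_op2_def by blast
  ultimately show False by simp
qed


end
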